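(* Let $(Y,d_Y)$ and $(X,d_X)$ be proper geodesic metric spaces, $a>0$, $b\ge0$, $\lambda\ge1$, $C\ge0$, and let $f:Y\to X$ be a continuous map such that (i) $d_X(f(y),f(y'))\ge a\,d_Y(y,y')-b$ for all $y,y'\in Y$; (ii) for every $y,y'\in Y$ and every geodesic segment $[y,y']$, the path $f([y,y'])$ is rectifiable and $\operatorname{Length}(f([y,y']))\le\lambda\,d_X(f(y),f(y'))+C$. If $(X,d_X)$ is $\delta$-hyperbolic, then $(Y,d_Y)$ is $\delta''$-hyperbolic with $$\delta''=\frac4a\Big((6\lambda^2+14\lambda+5)\delta+\frac{4\lambda+3}{6\lambda+2}C+b\Big)\le\frac4a\big((6\lambda^2+14\lambda+5)\delta+C+b\big).$$
   Context: A metric space is $\delta$-hyperbolic if it is proper, geodesic, and every geodesic triangle is $\delta$-thin: for a geodesic triangle $\Delta=[x,y,z]$ let $T_\Delta$ be the metric tripod with branch lengths $\alpha,\beta,\gamma\ge0$ determined by $d(x,y)=\alpha+\beta$, $d(x,z)=\alpha+\gamma$, $d(y,z)=\beta+\gamma$, and $f_\Delta:\Delta\to T_\Delta$ the map which is an isometry on each side; $\Delta$ is $\delta$-thin if any two points with the same image under $f_\Delta$ are at distance $\le\delta$. *)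

theory Defs
  imports "HOL-Analysis.Analysis"
begin

definition proper_space :: "'a::metric_space itself \<Rightarrow> bool" where
  "proper_space _ \<longleftrightarrow> (\<forall>(x::'a) r. compact (cball x r))"

definition geodesic_from :: "(real \<Rightarrow> 'a::metric_space) \<Rightarrow> 'a \<Rightarrow> 'a \<Rightarrow> bool" where
  "geodesic_from g x y \<longleftrightarrow> g 0 = x \<and> g (dist x y) = y \<and>
     (\<forall>s\<in>{0..dist x y}. \<forall>t\<in>{0..dist x y}. dist (g s) (g t) = \<bar>s - t\<bar>)"

definition geodesic_space :: "'a::metric_space itself \<Rightarrow> bool" where
  "geodesic_space _ \<longleftrightarrow> (\<forall>x y::'a. \<exists>g. geodesic_from g x y)"

definition partition_sums :: "(real \<Rightarrow> 'a::metric_space) \<Rightarrow> real \<Rightarrow> real \<Rightarrow> real set" where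
  "partition_sums g a b =
     {(\<Sum>i<n. dist (g (t i)) (g (t (Suc i)))) | n t.
        t 0 = a \<and> t n = b \<and> (\<forall>i<n. t i \<le> t (Suc i))}"

definition rectifiable_on :: "(real \<Rightarrow> 'a::metric_space) \<Rightarrow> real \<Rightarrow> real \<Rightarrow> bool" where
  "rectifiable_on g a b \<longleftrightarrow> bdd_above (partition_sums g a b)"

definition path_length :: "(real \<Rightarrow> 'a::metric_space) \<Rightarrow> real \<Rightarrow> real \<Rightarrow> real" where
  "path_length g a b = Sup (partition_sums g a b)"

text \<open>The metric tripod: points are (leg, distance from centre), centre normalised to (0,0).
  Legs 0,1,2 correspond to the vertices x,y,z.\<close>
definition tripod_pt :: "nat \<Rightarrow> real \<Rightarrow> nat \<times> real" where
  "tripod_pt i r = (if r = 0 then (0, 0) else (i, r))"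

text \<open>The map f_Delta on side k of the triangle [x,y,z], sides: 0 = [x,y], 1 = [x,z], 2 = [y,z],
  each parametrised by arclength from its first endpoint.\<close>
definition tripod_map :: "'a::metric_space \<Rightarrow> 'a \<Rightarrow> 'a \<Rightarrow> nat \<Rightarrow> real \<Rightarrow> nat \<times> real" where
  "tripod_map x y z k t =
    (let \<alpha> = (dist x y + dist x z - dist y z) / 2;
         \<beta> = (dist x y + dist y z - dist x z) / 2;
         \<gamma> = (dist x z + dist y z - dist x y) / 2 in
     if k = 0 then (if t \<le> \<alpha> then tripod_pt 0 (\<alpha> - t) else tripod_pt 1 (t - \<alpha>))
     else if k = 1 then (if t \<le> \<alpha> then tripod_pt 0 (\<alpha> - t) else tripod_pt 2 (t - \<alpha>))
     else (if t \<le> \<beta> then tripod_pt 1 (\<beta> - t) else tripod_pt 2 (t - \<beta>)))"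

definition delta_thin :: "real \<Rightarrow> 'a::metric_space \<Rightarrow> 'a \<Rightarrow> 'a \<Rightarrow>
    (real \<Rightarrow> 'a) \<Rightarrow> (real \<Rightarrow> 'a) \<Rightarrow> (real \<Rightarrow> 'a) \<Rightarrow> bool" where
  "delta_thin \<delta> x y z g0 g1 g2 \<longleftrightarrow>
    (let side = (\<lambda>k::nat. if k = 0 then g0 else if k = 1 then g1 else g2);
         len = (\<lambda>k::nat. if k = 0 then dist x y else if k = 1 then dist x z else dist y z) in
     \<forall>k\<in>{0,1,2}. \<forall>l\<in>{0,1,2}. \<forall>s\<in>{0..len k}. \<forall>t\<in>{0..len l}.
        tripod_map x y z k s = tripod_map x y z l t \<longrightarrow> dist (side k s) (side l t) \<le> \<delta>)"

definition hyperbolic :: "'a::metric_space itself \<Rightarrow> real \<Rightarrow> bool" where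
  "hyperbolic T \<delta> \<longleftrightarrow> proper_space T \<and> geodesic_space T \<and>
    (\<forall>(x::'a) y z g0 g1 g2. geodesic_from g0 x y \<and> geodesic_from g1 x z \<and> geodesic_from g2 y z
        \<longrightarrow> delta_thin \<delta> x y z g0 g1 g2)"

end

theory Submission
  imports Defs
begin


section \<open>Geodesic basics\<close>

lemma geod_dist:
  assumes "geodesic_from g x y" "s \<in> {0..dist x y}" "t \<in> {0..dist x y}"
  shows "dist (g s) (g t) = \<bar>s - t\<bar>"
  using assms unfolding geodesic_from_def by blast

lemma geod_0: "geodesic_from g x y \<Longrightarrow> g 0 = x"
  unfolding geodesic_from_def by blast

lemma geod_L: "geodesic_from g x y \<Longrightarrow> g (dist x y) = y"
  unfolding geodesic_from_def by blast

lemma geod_from_start: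
  assumes "geodesic_from g x y" "0 \<le> s" "s \<le> dist x y"
  shows "dist x (g s) = s"
proof -
  have "dist (g 0) (g s) = \<bar>0 - s\<bar>" using geod_dist[OF assms(1), of 0 s] assms by auto
  thus ?thesis using geod_0[OF assms(1)] assms by auto
qed

lemma geod_to_end:
  assumes "geodesic_from g x y" "0 \<le> s" "s \<le> dist x y"
  shows "dist (g s) y = dist x y - s"
proof -
  have "dist (g s) (g (dist x y)) = \<bar>s - dist x y\<bar>" using geod_dist[OF assms(1), of s "dist x y"] assms by auto
  thus ?thesis using geod_L[OF assms(1)] assms by auto
qed

lemma geod_cont:
  assumes "geodesic_from g x y"
  shows "continuous_on {0..dist x y} g"
  unfolding continuous_on_iff
proof (intro ballI allI impI)
  fix s e :: real assume s: "s \<in> {0..dist x y}" and e: "0 < e"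
  show "\<exists>d>0. \<forall>t\<in>{0..dist x y}. dist t s < d \<longrightarrow> dist (g t) (g s) < e"
    using e geod_dist[OF assms _ s] by (intro exI[of _ e]) (auto simp: dist_real_def)
qed

lemma geod_sub:
  assumes "geodesic_from g x y" "0 \<le> s" "s \<le> t" "t \<le> dist x y"
  shows "geodesic_from (\<lambda>\<tau>. g (s + \<tau>)) (g s) (g t)"
proof -
  have d: "dist (g s) (g t) = t - s" using geod_dist[OF assms(1), of s t] assms by auto
  show ?thesis unfolding geodesic_from_def d
    using geod_dist[OF assms(1)] assms by (auto simp: d)
qed

lemma geod_rev:
  assumes "geodesic_from g x y"
  shows "geodesic_from (\<lambda>\<tau>. g (dist x y - \<tau>)) y x"
  unfolding geodesic_from_def using geod_dist[OF assms] geod_0[OF assms] geod_L[OF assms]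
  by (auto simp: dist_commute)

lemma geod_exists: "geodesic_space TYPE('a::metric_space) \<Longrightarrow> \<exists>g. geodesic_from g (x::'a) y"
  unfolding geodesic_space_def by blast

section \<open>Gromov products\<close>

definition gp :: "'a::metric_space \<Rightarrow> 'a \<Rightarrow> 'a \<Rightarrow> real" where
  "gp w x y = (dist w x + dist w y - dist x y) / 2"

lemma gp_nonneg: "gp w x y \<ge> 0"
  unfolding gp_def using dist_triangle[of x y w] by (simp add: dist_commute)

lemma gp_le1: "gp w x y \<le> dist w x"
  unfolding gp_def using dist_triangle[of w y x] by (simp add: dist_commute)

lemma gp_le2: "gp w x y \<le> dist w y"
  unfolding gp_def using dist_triangle[of w x y] by (simp add: dist_commute)

lemma gp_sym: "gp w x y = gp w y x"
  unfolding gp_def by (simp add: dist_commute)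

lemma thin_spec:
  assumes "delta_thin \<delta> x y z g0 g1 g2" "k \<in> {0,1,2}" "l \<in> {0,1,2}"
    "s \<in> {0..(if k = 0 then dist x y else if k = 1 then dist x z else dist y z)}"
    "t \<in> {0..(if l = 0 then dist x y else if l = 1 then dist x z else dist y z)}"
    "tripod_map x y z k s = tripod_map x y z l t"
  shows "dist ((if k = 0 then g0 else if k = 1 then g1 else g2) s)
               ((if l = 0 then g0 else if l = 1 then g1 else g2) t) \<le> \<delta>"
  using assms unfolding delta_thin_def Let_def by blast

lemma hyp_thin:
  assumes "hyperbolic TYPE('a::metric_space) \<delta>" "geodesic_from g0 (x::'a) y" "geodesic_from g1 x z"
    "geodesic_from g2 y z"
  shows "delta_thin \<delta> x y z g0 g1 g2"
  using assms unfolding hyperbolic_def by blast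

lemma thin01:
  assumes "hyperbolic TYPE('a::metric_space) \<delta>" "geodesic_from g0 (x::'a) y" "geodesic_from g1 x z"
    "geodesic_from g2 y z" "0 \<le> s" "s \<le> gp x y z"
  shows "dist (g0 s) (g1 s) \<le> \<delta>"
proof -
  have th: "delta_thin \<delta> x y z g0 g1 g2" using hyp_thin[OF assms(1-4)] .
  have s1: "s \<le> dist x y" using gp_le1[of x y z] assms by linarith
  have s2: "s \<le> dist x z" using gp_le2[of x y z] assms by linarith
  have eq: "tripod_map x y z 0 s = tripod_map x y z 1 s"
    using assms(6) unfolding tripod_map_def gp_def Let_def by auto
  have "dist ((if (0::nat) = 0 then g0 else if (0::nat) = 1 then g1 else g2) s)
          ((if (1::nat) = 0 then g0 else if (1::nat) = 1 then g1 else g2) s) \<le> \<delta>"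
    by (rule thin_spec[OF th _ _ _ _ eq]) (use s1 s2 assms(5) in auto)
  thus ?thesis by simp
qed

lemma thin02:
  assumes "hyperbolic TYPE('a::metric_space) \<delta>" "geodesic_from g0 (x::'a) y" "geodesic_from g1 x z"
    "geodesic_from g2 y z" "gp x y z < s" "s \<le> dist x y"
  shows "dist (g0 s) (g2 (dist x y - s)) \<le> \<delta>"
proof -
  have th: "delta_thin \<delta> x y z g0 g1 g2" using hyp_thin[OF assms(1-4)] .
  have s0: "0 \<le> s" using gp_nonneg[of x y z] assms by linarith
  have t1: "dist x y - s \<le> dist y z" using assms(5) unfolding gp_def
    using dist_triangle[of x y z] by (simp add: dist_commute)
  have eq: "tripod_map x y z 0 s = tripod_map x y z 2 (dist x y - s)"
    using assms(5) unfolding tripod_map_def gp_def Let_def tripod_pt_def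
    by (auto simp: dist_commute field_simps)
  have "dist ((if (0::nat) = 0 then g0 else if (0::nat) = 1 then g1 else g2) s)
          ((if (2::nat) = 0 then g0 else if (2::nat) = 1 then g1 else g2) (dist x y - s)) \<le> \<delta>"
    by (rule thin_spec[OF th _ _ _ _ eq]) (use s0 t1 assms(6) in auto)
  thus ?thesis by simp
qed



lemma hyp_geod: "hyperbolic TYPE('a::metric_space) \<delta> \<Longrightarrow> geodesic_space TYPE('a)"
  unfolding hyperbolic_def by blast

lemma four_point:
  assumes hyp: "hyperbolic TYPE('a::metric_space) \<delta>"
  shows "gp (w::'a) x y \<ge> min (gp w x z) (gp w y z) - \<delta>"
proof -
  have gs: "geodesic_space TYPE('a)" using hyp_geod[OF hyp] .
  obtain g0 where g0: "geodesic_from g0 w x" using geod_exists[OF gs] by blast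
  obtain g0' where g0': "geodesic_from g0' w y" using geod_exists[OF gs] by blast
  obtain g1 where g1: "geodesic_from g1 w z" using geod_exists[OF gs] by blast
  obtain g2 where g2: "geodesic_from g2 x z" using geod_exists[OF gs] by blast
  obtain g2' where g2': "geodesic_from g2' y z" using geod_exists[OF gs] by blast
  define t where "t = min (gp w x z) (gp w y z)"
  have t0: "0 \<le> t" unfolding t_def using gp_nonneg by auto
  have t1: "t \<le> gp w x z" "t \<le> gp w y z" unfolding t_def by auto
  have tx: "t \<le> dist w x" using t1 gp_le1[of w x z] by linarith
  have ty: "t \<le> dist w y" using t1 gp_le1[of w y z] by linarith
  have a: "dist (g0 t) (g1 t) \<le> \<delta>" using thin01[OF hyp g0 g1 g2 t0 t1(1)] .
  have b: "dist (g0' t) (g1 t) \<le> \<delta>" using thin01[OF hyp g0' g1 g2' t0 t1(2)] .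
  have c: "dist (g0 t) x = dist w x - t" using geod_to_end[OF g0 t0 tx] .
  have d: "dist (g0' t) y = dist w y - t" using geod_to_end[OF g0' t0 ty] .
  have "dist x y \<le> dist x (g0 t) + dist (g0 t) (g1 t) + dist (g1 t) (g0' t) + dist (g0' t) y"
    using dist_triangle[of x y "g0 t"] dist_triangle[of "g0 t" y "g1 t"] dist_triangle[of "g1 t" y "g0' t"]
    by linarith
  hence "dist x y \<le> dist w x - t + \<delta> + \<delta> + (dist w y - t)"
    using a b c d by (simp add: dist_commute)
  hence "gp w x y \<ge> t - \<delta>" unfolding gp_def by argo
  thus ?thesis unfolding t_def .
qed

lemma near_geod:
  assumes hyp: "hyperbolic TYPE('a::metric_space) \<delta>" and g: "geodesic_from \<gamma> u (v::'a)"
  shows "dist (\<gamma> (gp u y v)) y \<le> gp y u v + \<delta>"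
proof -
  have gs: "geodesic_space TYPE('a)" using hyp_geod[OF hyp] .
  obtain g1 where g1: "geodesic_from g1 u y" using geod_exists[OF gs] by blast
  obtain g2 where g2: "geodesic_from g2 v y" using geod_exists[OF gs] by blast
  have e: "gp u y v = gp u v y" by (rule gp_sym)
  have a: "dist (\<gamma> (gp u v y)) (g1 (gp u v y)) \<le> \<delta>"
    using thin01[OF hyp g g1 g2 gp_nonneg order_refl] .
  have c: "dist (g1 (gp u v y)) y = dist u y - gp u v y"
    using geod_to_end[OF g1 gp_nonneg gp_le2] .
  have "dist (\<gamma> (gp u v y)) y \<le> dist (\<gamma> (gp u v y)) (g1 (gp u v y)) + dist (g1 (gp u v y)) y"
    by (rule dist_triangle)
  thus ?thesis using a c dist_commute[of y u] dist_commute[of y v] unfolding e unfolding gp_def by argo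
qed

lemma near_geod2:
  assumes hyp: "hyperbolic TYPE('a::metric_space) \<delta>" and g: "geodesic_from \<gamma> u (v::'a)"
    and r: "0 \<le> r" "r \<le> dist u v"
  shows "dist (\<gamma> r) y \<le> gp y u v + \<delta> + \<bar>gp u y v - r\<bar>"
proof -
  have "dist (\<gamma> r) (\<gamma> (gp u y v)) = \<bar>r - gp u y v\<bar>"
    using geod_dist[OF g] r gp_nonneg[of u y v] gp_le2[of u y v] by auto
  moreover have "dist (\<gamma> r) y \<le> dist (\<gamma> r) (\<gamma> (gp u y v)) + dist (\<gamma> (gp u y v)) y"
    by (rule dist_triangle)
  ultimately show ?thesis using near_geod[OF hyp g, of y] by linarith
qed

lemma proj_lower:
  assumes hyp: "hyperbolic TYPE('a::metric_space) \<delta>"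
    and lt: "gp u (x'::'a) v > gp u x v + \<delta>"
  shows "dist x x' \<ge> gp x u v + gp x' u v + (gp u x' v - gp u x v) - 2 * \<delta>"
proof -
  have fp: "gp u x v \<ge> min (gp u x x') (gp u v x') - \<delta>" using four_point[OF hyp] .
  have "gp u v x' = gp u x' v" by (rule gp_sym)
  hence "gp u x x' \<le> gp u x v + \<delta>" using fp lt by (auto simp: min_def split: if_splits)
  thus ?thesis unfolding gp_def using dist_commute[of x u] dist_commute[of x v]
    dist_commute[of x' u] dist_commute[of x' v] by argo
qed

lemma proj_lower_abs:
  assumes hyp: "hyperbolic TYPE('a::metric_space) \<delta>"
    and lt: "\<bar>gp u (x'::'a) v - gp u x v\<bar> > \<delta>"
  shows "dist x x' \<ge> gp x u v + gp x' u v + \<bar>gp u x' v - gp u x v\<bar> - 2 * \<delta>"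
proof (cases "gp u x' v \<ge> gp u x v")
  case True thus ?thesis using proj_lower[OF hyp, of u x v x'] lt by auto
next
  case False thus ?thesis using proj_lower[OF hyp, of u x' v x] lt by (auto simp: dist_commute)
qed

lemma proj_upper:
  assumes hyp: "hyperbolic TYPE('a::metric_space) \<delta>"
  shows "dist (x::'a) x' \<le> gp x u v + gp x' u v + \<bar>gp u x' v - gp u x v\<bar> + 2 * \<delta>"
proof -
  have fp: "gp u x x' \<ge> min (gp u x v) (gp u x' v) - \<delta>" using four_point[OF hyp] .
  show ?thesis
  proof (cases "gp u x v \<le> gp u x' v")
    case True
    hence "gp u x x' \<ge> gp u x v - \<delta>" using fp by simp
    thus ?thesis using True unfolding gp_def using dist_commute[of x u] dist_commute[of x v]
    dist_commute[of x' u] dist_commute[of x' v] by argo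
  next
    case False
    hence "gp u x x' \<ge> gp u x' v - \<delta>" using fp by simp
    thus ?thesis using False unfolding gp_def using dist_commute[of x u] dist_commute[of x v]
    dist_commute[of x' u] dist_commute[of x' v] by argo
  qed
qed

lemma ht_lip1: "gp x u v - gp x' u v \<le> dist x x'"
  unfolding gp_def using dist_triangle[of x u x'] dist_triangle[of x' u x]
    dist_triangle[of x v x'] dist_triangle[of x' v x] dist_commute[of x u] dist_commute[of x v]
    dist_commute[of x' u] dist_commute[of x' v] dist_commute[of x x'] by argo

lemma pos_lip1: "gp u x v - gp u x' v \<le> dist x x'"
  unfolding gp_def using dist_triangle[of x u x'] dist_triangle[of x' u x]
    dist_triangle[of x v x'] dist_triangle[of x' v x] dist_commute[of x u] dist_commute[of x v]
    dist_commute[of x' u] dist_commute[of x' v] dist_commute[of x x'] by argo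

lemma ht_lip: "\<bar>gp x u v - gp x' u v\<bar> \<le> dist x x'"
  using ht_lip1[of x u v x'] ht_lip1[of x' u v x] by (simp add: dist_commute)
lemma pos_lip: "\<bar>gp u x v - gp u x' v\<bar> \<le> dist x x'"
  using pos_lip1[of u x v x'] pos_lip1[of u x' v x] by (simp add: dist_commute)

lemma ht_start: "gp u u v = 0" unfolding gp_def by simp
lemma ht_end: "gp v u v = 0" unfolding gp_def by (simp add: dist_commute)
lemma pos_start: "gp u u v = 0" unfolding gp_def by simp
lemma pos_end: "gp u v v = dist u v" unfolding gp_def by simp



section \<open>Partitions\<close>

definition psum :: "(real \<Rightarrow> 'a::metric_space) \<Rightarrow> nat \<Rightarrow> (nat \<Rightarrow> real) \<Rightarrow> real" where
  "psum P n T = (\<Sum>i<n. dist (P (T i)) (P (T (Suc i))))"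

definition is_part :: "real \<Rightarrow> real \<Rightarrow> nat \<Rightarrow> (nat \<Rightarrow> real) \<Rightarrow> bool" where
  "is_part a b n T \<longleftrightarrow> T 0 = a \<and> T n = b \<and> (\<forall>i<n. T i \<le> T (Suc i))"

definition qgp :: "(real \<Rightarrow> 'a::metric_space) \<Rightarrow> real \<Rightarrow> real \<Rightarrow> real \<Rightarrow> real \<Rightarrow> bool" where
  "qgp P lam C s t \<longleftrightarrow> (\<forall>a b n T. s \<le> a \<longrightarrow> a \<le> b \<longrightarrow> b \<le> t \<longrightarrow> is_part a b n T \<longrightarrow>
      psum P n T \<le> lam * dist (P a) (P b) + C)"

lemma qgpD: "qgp P lam C s t \<Longrightarrow> s \<le> a \<Longrightarrow> a \<le> b \<Longrightarrow> b \<le> t \<Longrightarrow> is_part a b n T \<Longrightarrow>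
      psum P n T \<le> lam * dist (P a) (P b) + C"
  unfolding qgp_def by blast

lemma psum_concat:
  assumes "T1 n1 = T2 0"
  shows "psum P (n1 + n2) (\<lambda>i. if i \<le> n1 then T1 i else T2 (i - n1)) = psum P n1 T1 + psum P n2 T2"
proof (induction n2)
  case 0
  have "psum P n1 (\<lambda>i. if i \<le> n1 then T1 i else T2 (i - n1)) = psum P n1 T1"
    unfolding psum_def by (intro sum.cong) auto
  thus ?case by (simp add: psum_def)
next
  case (Suc n2)
  have "psum P (n1 + Suc n2) (\<lambda>i. if i \<le> n1 then T1 i else T2 (i - n1)) =
        psum P (n1 + n2) (\<lambda>i. if i \<le> n1 then T1 i else T2 (i - n1)) + dist (P (T2 n2)) (P (T2 (Suc n2)))"
    using assms unfolding psum_def by (auto simp: Suc_diff_le)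
  thus ?case using Suc by (simp add: psum_def)
qed

lemma is_part_concat:
  assumes "is_part a b n1 T1" "is_part b c n2 T2"
  shows "is_part a c (n1 + n2) (\<lambda>i. if i \<le> n1 then T1 i else T2 (i - n1))"
  using assms unfolding is_part_def
  by (auto simp: Suc_diff_le) (metis Suc_leI add_less_imp_less_left diff_Suc_1 le_add_diff_inverse le_neq_implies_less less_diff_conv2 not_less_eq_eq)

lemma psum_two: "psum P 1 (\<lambda>i. if i = 0 then a else b) = dist (P a) (P b)"
  unfolding psum_def by simp

lemma is_part_two: "a \<le> b \<Longrightarrow> is_part a b 1 (\<lambda>i. if i = 0 then a else b)"
  unfolding is_part_def by simp

lemma closed_real_min:
  fixes S :: "real set"
  assumes "closed S" "S \<noteq> {}" "S \<subseteq> {a..b}"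
  shows "\<exists>m\<in>S. \<forall>x\<in>S. m \<le> x"
proof -
  have bb: "bdd_below S" using assms(3) by (auto intro!: bdd_belowI[of _ a])
  show ?thesis using closed_contains_Inf[OF assms(2) bb assms(1)] cInf_lower[OF _ bb] by blast
qed

lemma closed_real_max:
  fixes S :: "real set"
  assumes "closed S" "S \<noteq> {}" "S \<subseteq> {a..b}"
  shows "\<exists>m\<in>S. \<forall>x\<in>S. x \<le> m"
proof -
  have bb: "bdd_above S" using assms(3) by (auto intro!: bdd_aboveI[of _ b])
  show ?thesis using closed_contains_Sup[OF assms(2) bb assms(1)] cSup_upper[OF _ bb] by blast
qed

lemma closed_level:
  fixes F :: "real \<Rightarrow> real"
  assumes "continuous_on {a..b} F"
  shows "closed {\<sigma>\<in>{a..b}. F \<sigma> = c}" "closed {\<sigma>\<in>{a..b}. F \<sigma> \<le> c}" "closed {\<sigma>\<in>{a..b}. F \<sigma> \<ge> c}"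
proof -
  have "{\<sigma>\<in>{a..b}. F \<sigma> = c} = {a..b} \<inter> F -` {c}" by auto
  thus "closed {\<sigma>\<in>{a..b}. F \<sigma> = c}" using continuous_closed_preimage[OF assms] by auto
  have "{\<sigma>\<in>{a..b}. F \<sigma> \<le> c} = {a..b} \<inter> F -` {..c}" by auto
  thus "closed {\<sigma>\<in>{a..b}. F \<sigma> \<le> c}" using continuous_closed_preimage[OF assms] by auto
  have "{\<sigma>\<in>{a..b}. F \<sigma> \<ge> c} = {a..b} \<inter> F -` {c..}" by auto
  thus "closed {\<sigma>\<in>{a..b}. F \<sigma> \<ge> c}" using continuous_closed_preimage[OF assms] by auto
qed

lemma ivt_between:
  fixes F :: "real \<Rightarrow> real"
  assumes "continuous_on {a..b} F" "a \<le> b" "min (F a) (F b) \<le> y" "y \<le> max (F a) (F b)"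
  shows "\<exists>x. a \<le> x \<and> x \<le> b \<and> F x = y"
proof (cases "F a \<le> F b")
  case True thus ?thesis using IVT'[of F a y b] assms by auto
next
  case False thus ?thesis using IVT2'[of F b y a] assms by auto
qed

lemma gp_cont:
  assumes "continuous_on S P"
  shows "continuous_on S (\<lambda>\<sigma>. gp (P \<sigma>) u v)" "continuous_on S (\<lambda>\<sigma>. gp u (P \<sigma>) v)"
  unfolding gp_def by (intro continuous_intros assms | simp)+

lemma tele_sum:
  fixes H :: "nat \<Rightarrow> real"
  assumes "1 \<le> k" "\<And>j. 0 < j \<Longrightarrow> j < k \<Longrightarrow> H j \<ge> R"
  shows "(\<Sum>i<k. H i + H (Suc i)) \<ge> H 0 + H k + 2 * (real k - 1) * R"
  using assms
proof (induction k)
  case 0 thus ?case by simp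
next
  case (Suc k)
  show ?case
  proof (cases "k = 0")
    case True thus ?thesis by simp
  next
    case False
    hence IH: "(\<Sum>i<k. H i + H (Suc i)) \<ge> H 0 + H k + 2 * (real k - 1) * R"
      using Suc by auto
    have "H k \<ge> R" using Suc.prems(2)[of k] False by auto
    thus ?thesis using IH by (simp add: algebra_simps)
  qed
qed



lemma chain:
  fixes P :: "real \<Rightarrow> 'a::metric_space" and u v :: 'a
  assumes hyp: "hyperbolic TYPE('a) \<delta>" and dpos: "\<delta> > 0" and Rd: "R \<ge> \<delta>" and tt: "t0 \<le> t1"
    and cont: "continuous_on {t0..t1} P"
    and mid: "\<And>\<sigma>. t0 < \<sigma> \<Longrightarrow> \<sigma> < t1 \<Longrightarrow> gp (P \<sigma>) u v \<ge> R"
    and ends: "gp (P t0) u v \<le> R \<or> gp (P t1) u v \<le> R"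
  shows "\<exists>n T. is_part t0 t1 n T \<and> psum P n T \<ge> gp (P t0) u v + gp (P t1) u v - 4*R + \<delta>
            + (2*R/\<delta> - 1) * \<bar>gp u (P t1) v - gp u (P t0) v\<bar>"
proof -
  define H where "H \<sigma> = gp (P \<sigma>) u v" for \<sigma>
  define Pi where "Pi \<sigma> = gp u (P \<sigma>) v" for \<sigma>
  define \<Delta> where "\<Delta> = \<bar>Pi t1 - Pi t0\<bar>"
  define \<kappa> where "\<kappa> = 2*R/\<delta> - 1"
  have kd: "\<kappa> * \<delta> = 2*R - \<delta>" unfolding \<kappa>_def using dpos by (simp add: field_simps)
  have k0: "\<kappa> \<ge> 0" unfolding \<kappa>_def using dpos Rd by (simp add: field_simps)
  have contPi: "continuous_on {t0..t1} Pi" unfolding Pi_def by (rule gp_cont[OF cont])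
  have goal_eq: "gp (P t0) u v + gp (P t1) u v - 4*R + \<delta> + (2*R/\<delta> - 1) * \<bar>gp u (P t1) v - gp u (P t0) v\<bar>
      = H t0 + H t1 - 4*R + \<delta> + \<kappa> * \<Delta>" unfolding H_def Pi_def \<kappa>_def \<Delta>_def by simp
  have "\<exists>n T. is_part t0 t1 n T \<and> psum P n T \<ge> H t0 + H t1 - 4*R + \<delta> + \<kappa> * \<Delta>"
  proof (cases "\<Delta> \<le> \<delta>")
    case True
    have "\<kappa> * \<Delta> \<le> \<kappa> * \<delta>" using True k0 by (rule mult_left_mono)
    moreover have "dist (P t0) (P t1) \<ge> \<bar>H t0 - H t1\<bar>" unfolding H_def by (rule ht_lip)
    ultimately have "psum P 1 (\<lambda>i. if i = 0 then t0 else t1) \<ge> H t0 + H t1 - 4*R + \<delta> + \<kappa> * \<Delta>"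
      unfolding psum_two using kd ends unfolding H_def abs_le_iff by (elim disjE conjE; linarith)
    thus ?thesis using is_part_two[OF tt] by blast
  next
    case False
    hence Dpos: "\<Delta> > \<delta>" by simp
    define q where "q = \<Delta> / \<delta>"
    have q1: "q > 1" unfolding q_def using Dpos dpos by (simp add: field_simps)
    define k where "k = nat (\<lceil>q\<rceil> - 1)"
    have ceil: "real_of_int \<lceil>q\<rceil> \<ge> q" "real_of_int \<lceil>q\<rceil> < q + 1" by linarith+
    have c2: "\<lceil>q\<rceil> \<ge> 2" using q1 ceil by linarith
    have kr: "real k = real_of_int \<lceil>q\<rceil> - 1" unfolding k_def using c2 by simp
    have kq1: "real k < q" and kq2: "real k \<ge> q - 1" using kr ceil by linarith+
    have k1: "k \<ge> 1" using kr c2 by linarith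
    have kpos: "real k > 0" using k1 by simp
    define c where "c = (Pi t1 - Pi t0) / real k"
    have absc: "\<bar>c\<bar> = \<Delta> / real k" unfolding c_def \<Delta>_def using kpos by simp
    have absc_gt: "\<bar>c\<bar> > \<delta>"
    proof -
      have "real k * \<delta> < \<Delta>" using kq1 dpos unfolding q_def by (simp add: field_simps)
      thus ?thesis unfolding absc using kpos by (simp add: field_simps)
    qed
    have cne: "c \<noteq> 0" using absc_gt dpos by auto
    define lev where "lev j = Pi t0 + real j * c" for j
    have lev0: "lev 0 = Pi t0" unfolding lev_def by simp
    have levk: "lev k = Pi t1" unfolding lev_def c_def using kpos by simp
    define S where "S j = {\<sigma>\<in>{t0..t1}. Pi \<sigma> = lev j}" for j
    have Sclosed: "closed (S j)" for j unfolding S_def by (rule closed_level[OF contPi])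
    have between: "min (lev 0) (lev m) \<le> lev j \<and> lev j \<le> max (lev 0) (lev m)" if "j \<le> m" for j m
    proof (cases "c \<ge> 0")
      case True
      have "real j * c \<le> real m * c" using that True by (intro mult_right_mono) auto
      moreover have "0 \<le> real j * c" using True by simp
      ultimately show ?thesis unfolding lev_def by auto
    next
      case False
      have "real m * c \<le> real j * c" using that False by (intro mult_right_mono_neg) auto
      moreover have "real j * c \<le> 0" using False by (simp add: mult_nonneg_nonpos)
      ultimately show ?thesis unfolding lev_def by auto
    qed
    have Sne: "S j \<noteq> {}" if jk: "j \<le> k" for j
    proof -
      obtain x where "t0 \<le> x" "x \<le> t1" "Pi x = lev j"
        using ivt_between[OF contPi tt, of "lev j"] between[OF jk] lev0 levk by auto
      thus ?thesis unfolding S_def by auto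
    qed
    define Tm where "Tm j = (SOME \<sigma>. \<sigma> \<in> S j \<and> (\<forall>\<sigma>'\<in>S j. \<sigma> \<le> \<sigma>'))" for j
    have Tm: "Tm j \<in> S j \<and> (\<forall>\<sigma>'\<in>S j. Tm j \<le> \<sigma>')" if "j \<le> k" for j
    proof -
      have sub: "S j \<subseteq> {t0..t1}" unfolding S_def by auto
      have "\<exists>\<sigma>. \<sigma> \<in> S j \<and> (\<forall>\<sigma>'\<in>S j. \<sigma> \<le> \<sigma>')"
        using closed_real_min[OF Sclosed Sne[OF that] sub] by blast
      thus ?thesis unfolding Tm_def by (rule someI_ex)
    qed
    have TmI: "t0 \<le> Tm j" "Tm j \<le> t1" "Pi (Tm j) = lev j" if "j \<le> k" for j
      using Tm[OF that] unfolding S_def by auto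
    have Tm0: "Tm 0 = t0"
    proof -
      have "t0 \<in> S 0" unfolding S_def using tt lev0 by auto
      thus ?thesis using Tm[of 0] TmI[of 0] by fastforce
    qed
    have Tmono: "Tm j \<le> Tm (Suc j)" if "j < k" for j
    proof (rule ccontr)
      assume "\<not> Tm j \<le> Tm (Suc j)"
      hence lt: "Tm (Suc j) < Tm j" by simp
      have sk: "Suc j \<le> k" using that by simp
      have cs: "continuous_on {t0..Tm (Suc j)} Pi"
        using continuous_on_subset[OF contPi] TmI[OF sk] by auto
      have bt: "min (Pi t0) (Pi (Tm (Suc j))) \<le> lev j \<and> lev j \<le> max (Pi t0) (Pi (Tm (Suc j)))"
        using between[of j "Suc j"] lev0 TmI(3)[OF sk] by auto
      obtain x where x: "t0 \<le> x" "x \<le> Tm (Suc j)" "Pi x = lev j"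
        using ivt_between[OF cs TmI(1)[OF sk]] bt by blast
      have "x \<in> S j" unfolding S_def using x TmI[OF sk] by auto
      hence "Tm j \<le> x" using Tm[of j] that by auto
      thus False using x lt by simp
    qed
    have inter: "t0 < Tm j \<and> Tm j < t1" if "0 < j" "j < k" for j
    proof -
      have jk: "j \<le> k" using that by simp
      have "lev j \<noteq> lev 0" unfolding lev_def using cne that by simp
      hence "Tm j \<noteq> t0" using TmI(3)[OF jk] lev0 by auto
      moreover have "lev j \<noteq> lev k" unfolding lev_def using cne that by simp
      hence "Tm j \<noteq> t1" using TmI(3)[OF jk] levk by auto
      ultimately show ?thesis using TmI[OF jk] by auto
    qed
    have step: "dist (P (Tm j)) (P (Tm (Suc j))) \<ge> H (Tm j) + H (Tm (Suc j)) + \<bar>c\<bar> - 2*\<delta>"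
      if "j < k" for j
    proof -
      have "Pi (Tm (Suc j)) - Pi (Tm j) = c" using TmI(3)[of j] TmI(3)[of "Suc j"] that
        unfolding lev_def by (simp add: algebra_simps)
      hence "\<bar>gp u (P (Tm (Suc j))) v - gp u (P (Tm j)) v\<bar> > \<delta>" using absc_gt unfolding Pi_def by simp
      from proj_lower_abs[OF hyp this] show ?thesis unfolding H_def Pi_def
        using \<open>Pi (Tm (Suc j)) - Pi (Tm j) = c\<close> unfolding Pi_def by simp
    qed
    define T where "T i = (if i \<le> k then Tm i else t1)" for i
    have part: "is_part t0 t1 (Suc k) T"
      unfolding is_part_def T_def using Tm0 Tmono TmI(2)[of k] by (auto simp: less_Suc_eq)
    have ps: "psum P (Suc k) T = (\<Sum>i<k. dist (P (Tm i)) (P (Tm (Suc i)))) + dist (P (Tm k)) (P t1)"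
      unfolding psum_def T_def by (simp add: sum.lessThan_Suc)
    have s1: "(\<Sum>i<k. dist (P (Tm i)) (P (Tm (Suc i)))) \<ge> (\<Sum>i<k. H (Tm i) + H (Tm (Suc i)) + (\<bar>c\<bar> - 2*\<delta>))"
      by (intro sum_mono) (use step in \<open>fastforce simp: algebra_simps\<close>)
    have s2: "(\<Sum>i<k. H (Tm i) + H (Tm (Suc i)) + (\<bar>c\<bar> - 2*\<delta>)) =
        (\<Sum>i<k. H (Tm i) + H (Tm (Suc i))) + (\<Delta> - 2 * real k * \<delta>)"
    proof -
      have "(\<Sum>i<k. H (Tm i) + H (Tm (Suc i)) + (\<bar>c\<bar> - 2*\<delta>)) =
        (\<Sum>i<k. H (Tm i) + H (Tm (Suc i))) + real k * (\<bar>c\<bar> - 2*\<delta>)"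
        by (simp add: sum.distrib)
      moreover have "real k * (\<bar>c\<bar> - 2*\<delta>) = \<Delta> - 2 * real k * \<delta>"
        using kpos unfolding absc by (simp add: field_simps)
      ultimately show ?thesis by simp
    qed
    have s3: "(\<Sum>i<k. H (Tm i) + H (Tm (Suc i))) \<ge> H (Tm 0) + H (Tm k) + 2 * (real k - 1) * R"
      by (rule tele_sum[OF k1]) (use inter mid in \<open>auto simp: H_def\<close>)
    have s4: "dist (P (Tm k)) (P t1) \<ge> H t1 - H (Tm k)" unfolding H_def using ht_lip[of "P (Tm k)" u v "P t1"] by auto
    have tot: "psum P (Suc k) T \<ge> H t0 + H t1 + 2 * (real k - 1) * R + \<Delta> - 2 * real k * \<delta>"
    proof -
      have s3': "(\<Sum>i<k. H (Tm i) + H (Tm (Suc i))) \<ge> H t0 + H (Tm k) + 2 * (real k - 1) * R"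
        using s3 Tm0 by simp
      show ?thesis using ps s1 s2 s3' s4 by linarith
    qed
    have kD: "\<kappa> * \<Delta> = 2 * R * q - \<Delta>" unfolding \<kappa>_def q_def using dpos by (simp add: field_simps)
    have Dq: "\<Delta> = q * \<delta>" unfolding q_def using dpos by simp
    have nn: "(real k - q + 1) * (R - \<delta>) \<ge> 0" using kq2 Rd by simp
    have e1: "\<kappa> * \<Delta> = 2 * (q * R) - q * \<delta>" using kD Dq by (simp add: algebra_simps)
    have e2: "(real k - q + 1) * (R - \<delta>) = real k * R - q * R + R - real k * \<delta> + q * \<delta> - \<delta>"
      by (simp add: algebra_simps)
    have e3: "2 * (real k - 1) * R = 2 * (real k * R) - 2 * R" by (simp add: algebra_simps)
    have e4: "2 * real k * \<delta> = 2 * (real k * \<delta>)" by simp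
    have "2 * (real k - 1) * R + \<Delta> - 2 * real k * \<delta> \<ge> - 4*R + \<delta> + \<kappa> * \<Delta>"
      unfolding e1 e3 e4 using nn e2 Dq dpos by linarith
    thus ?thesis using tot part by (intro exI[of _ "Suc k"] exI[of _ T]) auto
  qed
  then obtain n T where "is_part t0 t1 n T" "H t0 + H t1 - 4*R + \<delta> + \<kappa> * \<Delta> \<le> psum P n T" by blast
  thus ?thesis using goal_eq by (intro exI[of _ n] exI[of _ T]) linarith
qed



lemma ht_bound:
  fixes P :: "real \<Rightarrow> 'a::metric_space"
  assumes hyp: "hyperbolic TYPE('a) \<delta>" and dpos: "\<delta> > 0" and lam: "lam \<ge> 1" and C: "C \<ge> 0"
    and st: "s \<le> t" and cont: "continuous_on {s..t} P" and qg: "qgp P lam C s t"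
    and tau: "s \<le> \<tau>" "\<tau> \<le> t"
  shows "gp (P \<tau>) (P s) (P t) \<le> C/2 + (lam * lam * \<delta> + 6 * (lam * \<delta>) + \<delta>) / 2"
proof -
  define u where "u = P s"
  define v where "v = P t"
  define R where "R = (lam * \<delta> + \<delta>) / 2"
  define H where "H \<sigma> = gp (P \<sigma>) u v" for \<sigma>
  define Pi where "Pi \<sigma> = gp u (P \<sigma>) v" for \<sigma>
  have Rd: "R \<ge> \<delta>" unfolding R_def using lam dpos mult_right_mono[OF lam, of \<delta>] by auto
  have kap: "2*R/\<delta> - 1 = lam" unfolding R_def using dpos by (simp add: field_simps)
  have lR: "lam * R = (lam * lam * \<delta> + lam * \<delta>) / 2" unfolding R_def by (simp add: algebra_simps)
  have contH: "continuous_on {s..t} H" unfolding H_def by (rule gp_cont[OF cont])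
  have Hs: "H s = 0" unfolding H_def u_def by (rule ht_start)
  have Ht: "H t = 0" unfolding H_def v_def by (rule ht_end)
  have ld: "lam * \<delta> \<ge> \<delta>" using mult_right_mono[OF lam, of \<delta>] dpos by simp
  have lld: "lam * lam * \<delta> \<ge> 0" using lam dpos by simp
  show ?thesis
  proof (cases "H \<tau> \<le> R")
    case True
    thus ?thesis unfolding H_def u_def v_def R_def using C ld lld dpos by argo
  next
    case False
    hence Htau: "H \<tau> > R" by simp
    define S1 where "S1 = {\<sigma>\<in>{s..\<tau>}. H \<sigma> \<le> R}"
    have c1: "continuous_on {s..\<tau>} H" using continuous_on_subset[OF contH] tau by auto
    have S1c: "closed S1" unfolding S1_def by (rule closed_level(2)[OF c1])
    have S1ne: "S1 \<noteq> {}" unfolding S1_def using Hs Rd dpos tau by auto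
    have S1s: "S1 \<subseteq> {s..\<tau>}" unfolding S1_def by auto
    obtain \<sigma>1 where s1: "\<sigma>1 \<in> S1" "\<forall>x\<in>S1. x \<le> \<sigma>1"
      using closed_real_max[OF S1c S1ne S1s] by blast
    have s1b: "s \<le> \<sigma>1" "\<sigma>1 \<le> \<tau>" "H \<sigma>1 \<le> R" using s1(1) unfolding S1_def by auto
    have mid1: "R \<le> H \<sigma>" if "\<sigma>1 < \<sigma>" "\<sigma> \<le> \<tau>" for \<sigma>
    proof (rule ccontr)
      assume "\<not> R \<le> H \<sigma>"
      hence "\<sigma> \<in> S1" unfolding S1_def using that s1b by auto
      thus False using s1(2) that by auto
    qed
    define S2 where "S2 = {\<sigma>\<in>{\<tau>..t}. H \<sigma> \<le> R}"
    have c2: "continuous_on {\<tau>..t} H" using continuous_on_subset[OF contH] tau by auto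
    have S2c: "closed S2" unfolding S2_def by (rule closed_level(2)[OF c2])
    have S2ne: "S2 \<noteq> {}" unfolding S2_def using Ht Rd dpos tau by auto
    have S2s: "S2 \<subseteq> {\<tau>..t}" unfolding S2_def by auto
    obtain \<sigma>2 where s2: "\<sigma>2 \<in> S2" "\<forall>x\<in>S2. \<sigma>2 \<le> x"
      using closed_real_min[OF S2c S2ne S2s] by blast
    have s2b: "\<tau> \<le> \<sigma>2" "\<sigma>2 \<le> t" "H \<sigma>2 \<le> R" using s2(1) unfolding S2_def by auto
    have mid2: "R \<le> H \<sigma>" if "\<tau> \<le> \<sigma>" "\<sigma> < \<sigma>2" for \<sigma>
    proof (rule ccontr)
      assume "\<not> R \<le> H \<sigma>"
      hence "\<sigma> \<in> S2" unfolding S2_def using that s2b by auto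
      thus False using s2(2) that by auto
    qed
    have cc1: "continuous_on {\<sigma>1..\<tau>} P" using continuous_on_subset[OF cont] s1b tau by auto
    have cc2: "continuous_on {\<tau>..\<sigma>2} P" using continuous_on_subset[OF cont] s2b tau by auto
    obtain n1 T1 where p1: "is_part \<sigma>1 \<tau> n1 T1"
      "psum P n1 T1 \<ge> H \<sigma>1 + H \<tau> - 4*R + \<delta> + lam * \<bar>Pi \<tau> - Pi \<sigma>1\<bar>"
      using chain[OF hyp dpos Rd s1b(2) cc1, of u v] mid1 s1b(3) unfolding kap H_def Pi_def by auto
    obtain n2 T2 where p2: "is_part \<tau> \<sigma>2 n2 T2"
      "psum P n2 T2 \<ge> H \<tau> + H \<sigma>2 - 4*R + \<delta> + lam * \<bar>Pi \<sigma>2 - Pi \<tau>\<bar>"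
      using chain[OF hyp dpos Rd s2b(1) cc2, of u v] mid2 s2b(3) unfolding kap H_def Pi_def by auto
    define T where "T i = (if i \<le> n1 then T1 i else T2 (i - n1))" for i
    have pT: "is_part \<sigma>1 \<sigma>2 (n1 + n2) T" unfolding T_def by (rule is_part_concat[OF p1(1) p2(1)])
    have sT: "psum P (n1 + n2) T = psum P n1 T1 + psum P n2 T2"
      unfolding T_def by (rule psum_concat) (use p1(1) p2(1) in \<open>simp add: is_part_def\<close>)
    have q: "psum P (n1 + n2) T \<le> lam * dist (P \<sigma>1) (P \<sigma>2) + C"
      using qgpD[OF qg _ _ _ pT] s1b s2b tau by auto
    define D1 where "D1 = \<bar>Pi \<tau> - Pi \<sigma>1\<bar>"
    define D2 where "D2 = \<bar>Pi \<sigma>2 - Pi \<tau>\<bar>"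
    have du: "dist (P \<sigma>1) (P \<sigma>2) \<le> H \<sigma>1 + H \<sigma>2 + (D1 + D2) + 2 * \<delta>"
      using proj_upper[OF hyp, of "P \<sigma>1" "P \<sigma>2" u v] unfolding H_def Pi_def D1_def D2_def by linarith
    have du2: "lam * dist (P \<sigma>1) (P \<sigma>2) \<le> lam * (H \<sigma>1 + H \<sigma>2 + (D1 + D2) + 2 * \<delta>)"
      using mult_left_mono[OF du] lam by simp
    have ex: "lam * (H \<sigma>1 + H \<sigma>2 + (D1 + D2) + 2 * \<delta>) =
       lam * H \<sigma>1 + lam * H \<sigma>2 + lam * D1 + lam * D2 + 2 * (lam * \<delta>)" by (simp add: algebra_simps)
    have h1: "(lam - 1) * H \<sigma>1 \<le> (lam - 1) * R" using s1b(3) lam by (intro mult_left_mono) auto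
    have h2: "(lam - 1) * H \<sigma>2 \<le> (lam - 1) * R" using s2b(3) lam by (intro mult_left_mono) auto
    have h1': "lam * H \<sigma>1 \<le> H \<sigma>1 + lam * R - R" using h1 by (simp add: algebra_simps)
    have h2': "lam * H \<sigma>2 \<le> H \<sigma>2 + lam * R - R" using h2 by (simp add: algebra_simps)
    have "2 * H \<tau> \<le> 2 * (lam * R) + 6 * R + 2 * (lam * \<delta>) - 2 * \<delta> + C"
      using p1(2) p2(2) sT q du2 ex h1' h2' unfolding D1_def[symmetric] D2_def[symmetric] by linarith
    thus ?thesis unfolding H_def u_def v_def using lR unfolding R_def by (simp add: field_simps)
  qed
qed



lemma near_path:
  fixes P :: "real \<Rightarrow> 'a::metric_space"
  assumes hyp: "hyperbolic TYPE('a) \<delta>" and dpos: "\<delta> > 0" and lam: "lam \<ge> 1" and C: "C \<ge> 0"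
    and st: "s \<le> t" and cont: "continuous_on {s..t} P" and qg: "qgp P lam C s t"
    and g: "geodesic_from \<gamma> (P s) (P t)" and r: "0 \<le> r" "r \<le> dist (P s) (P t)"
  shows "\<exists>\<tau>\<in>{s..t}. dist (\<gamma> r) (P \<tau>) \<le> C/6 + (lam * lam * \<delta> + 10 * (lam * \<delta>) + 21 * \<delta>) / 6"
proof -
  define u where "u = P s"
  define v where "v = P t"
  define R where "R = (lam * \<delta> + 4 * \<delta>) / 2"
  define H where "H \<sigma> = gp (P \<sigma>) u v" for \<sigma>
  define Pi where "Pi \<sigma> = gp u (P \<sigma>) v" for \<sigma>
  have Rd: "R \<ge> \<delta>" unfolding R_def using lam dpos mult_right_mono[OF lam, of \<delta>] by auto
  have kap: "2*R/\<delta> - 1 = lam + 3" unfolding R_def using dpos by (simp add: field_simps)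
  have lR: "lam * R = (lam * lam * \<delta> + 4 * (lam * \<delta>)) / 2" unfolding R_def by (simp add: algebra_simps)
  have contH: "continuous_on {s..t} H" unfolding H_def by (rule gp_cont[OF cont])
  have contPi: "continuous_on {s..t} Pi" unfolding Pi_def by (rule gp_cont[OF cont])
  have Hs: "H s = 0" unfolding H_def u_def by (rule ht_start)
  have Ht: "H t = 0" unfolding H_def v_def by (rule ht_end)
  have Ps: "Pi s = 0" unfolding Pi_def u_def by (rule pos_start)
  have Pt: "Pi t = dist u v" unfolding Pi_def v_def by (rule pos_end)
  have ld: "lam * \<delta> \<ge> \<delta>" using mult_right_mono[OF lam, of \<delta>] dpos by simp
  have lld: "lam * lam * \<delta> \<ge> 0" using lam dpos by simp
  have g': "geodesic_from \<gamma> u v" using g unfolding u_def v_def .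
  have r': "r \<le> dist u v" using r(2) unfolding u_def v_def .
  have near: "dist (\<gamma> r) (P \<sigma>) \<le> H \<sigma> + \<delta> + \<bar>Pi \<sigma> - r\<bar>" for \<sigma>
    using near_geod2[OF hyp g' r(1) r'] unfolding H_def Pi_def .
  define Z1 where "Z1 = {\<sigma>\<in>{s..t}. H \<sigma> \<le> R} \<inter> {\<sigma>\<in>{s..t}. Pi \<sigma> \<le> r}"
  have Z1c: "closed Z1" unfolding Z1_def using closed_level(2)[OF contH] closed_level(2)[OF contPi] by auto
  have Z1ne: "s \<in> Z1" unfolding Z1_def using Hs Ps Rd dpos st r by auto
  have Z1s: "Z1 \<subseteq> {s..t}" unfolding Z1_def by auto
  obtain \<sigma>1 where s1: "\<sigma>1 \<in> Z1" "\<forall>x\<in>Z1. x \<le> \<sigma>1"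
    using closed_real_max[OF Z1c _ Z1s] Z1ne by blast
  have s1b: "s \<le> \<sigma>1" "\<sigma>1 \<le> t" "H \<sigma>1 \<le> R" "Pi \<sigma>1 \<le> r" using s1(1) unfolding Z1_def by auto
  define Z2 where "Z2 = {\<sigma>\<in>{\<sigma>1..t}. H \<sigma> \<le> R} \<inter> {\<sigma>\<in>{\<sigma>1..t}. Pi \<sigma> \<ge> r}"
  have cH2: "continuous_on {\<sigma>1..t} H" using continuous_on_subset[OF contH] s1b by auto
  have cP2: "continuous_on {\<sigma>1..t} Pi" using continuous_on_subset[OF contPi] s1b by auto
  have Z2c: "closed Z2" unfolding Z2_def using closed_level(2)[OF cH2] closed_level(3)[OF cP2] by auto
  have Z2ne: "t \<in> Z2" unfolding Z2_def using Ht Pt Rd dpos s1b r' by auto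
  have Z2s: "Z2 \<subseteq> {\<sigma>1..t}" unfolding Z2_def by auto
  obtain \<sigma>2 where s2: "\<sigma>2 \<in> Z2" "\<forall>x\<in>Z2. \<sigma>2 \<le> x"
    using closed_real_min[OF Z2c _ Z2s] Z2ne by blast
  have s2b: "\<sigma>1 \<le> \<sigma>2" "\<sigma>2 \<le> t" "H \<sigma>2 \<le> R" "Pi \<sigma>2 \<ge> r" using s2(1) unfolding Z2_def by auto
  define B where "B = C/6 + (lam * lam * \<delta> + 10 * (lam * \<delta>) + 21 * \<delta>) / 6"
  have "\<exists>\<tau>\<in>{s..t}. dist (\<gamma> r) (P \<tau>) \<le> B"
  proof (cases "\<sigma>1 = \<sigma>2")
    case True
    hence "Pi \<sigma>1 = r" using s1b s2b by auto
    hence "dist (\<gamma> r) (P \<sigma>1) \<le> R + \<delta>" using near[of \<sigma>1] s1b by auto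
    moreover have "R + \<delta> \<le> B" unfolding R_def B_def using C ld lld dpos by argo
    ultimately show ?thesis using s1b by (intro bexI[of _ \<sigma>1]) auto
  next
    case False
    hence lt: "\<sigma>1 < \<sigma>2" using s2b by auto
    have mid: "R \<le> H \<sigma>" if "\<sigma>1 < \<sigma>" "\<sigma> < \<sigma>2" for \<sigma>
    proof (rule ccontr)
      assume nh: "\<not> R \<le> H \<sigma>"
      show False
      proof (cases "Pi \<sigma> \<le> r")
        case True
        hence "\<sigma> \<in> Z1" unfolding Z1_def using nh that s1b s2b by auto
        thus False using s1(2) that by auto
      next
        case False
        hence "\<sigma> \<in> Z2" unfolding Z2_def using nh that s1b s2b by auto
        thus False using s2(2) that by auto
      qed
    qed
    have cc: "continuous_on {\<sigma>1..\<sigma>2} P" using continuous_on_subset[OF cont] s1b s2b by auto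
    define D where "D = Pi \<sigma>2 - Pi \<sigma>1"
    have D0: "\<bar>Pi \<sigma>2 - Pi \<sigma>1\<bar> = D" unfolding D_def using s1b s2b by auto
    obtain n T where p: "is_part \<sigma>1 \<sigma>2 n T"
      "psum P n T \<ge> H \<sigma>1 + H \<sigma>2 - 4*R + \<delta> + (lam + 3) * D"
      using chain[OF hyp dpos Rd s2b(1) cc, of u v] mid s1b(3) unfolding kap H_def Pi_def D0[unfolded Pi_def]
      by auto
    have q: "psum P n T \<le> lam * dist (P \<sigma>1) (P \<sigma>2) + C"
      using qgpD[OF qg _ _ _ p(1)] s1b s2b by auto
    have du: "dist (P \<sigma>1) (P \<sigma>2) \<le> H \<sigma>1 + H \<sigma>2 + D + 2 * \<delta>"
      using proj_upper[OF hyp, of "P \<sigma>1" "P \<sigma>2" u v] D0 unfolding H_def Pi_def by simp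
    have du2: "lam * dist (P \<sigma>1) (P \<sigma>2) \<le> lam * (H \<sigma>1 + H \<sigma>2 + D + 2 * \<delta>)"
      using mult_left_mono[OF du] lam by simp
    have ex: "lam * (H \<sigma>1 + H \<sigma>2 + D + 2 * \<delta>) =
       lam * H \<sigma>1 + lam * H \<sigma>2 + lam * D + 2 * (lam * \<delta>)" by (simp add: algebra_simps)
    have ex2: "(lam + 3) * D = lam * D + 3 * D" by (simp add: algebra_simps)
    have h1: "(lam - 1) * H \<sigma>1 \<le> (lam - 1) * R" using s1b(3) lam by (intro mult_left_mono) auto
    have h2: "(lam - 1) * H \<sigma>2 \<le> (lam - 1) * R" using s2b(3) lam by (intro mult_left_mono) auto
    have h1': "lam * H \<sigma>1 \<le> H \<sigma>1 + lam * R - R" using h1 by (simp add: algebra_simps)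
    have h2': "lam * H \<sigma>2 \<le> H \<sigma>2 + lam * R - R" using h2 by (simp add: algebra_simps)
    have D3: "3 * D \<le> 2 * (lam * R) + 2 * R + 2 * (lam * \<delta>) - \<delta> + C"
      using p(2) q du2 ex ex2 h1' h2' by linarith
    have Dbound: "R + \<delta> + D / 2 \<le> B"
    proof -
      have "D \<le> (2 * (lam * R) + 2 * R + 2 * (lam * \<delta>) - \<delta> + C) / 3" using D3 by simp
      thus ?thesis unfolding B_def using lR unfolding R_def by (simp add: field_simps)
    qed
    show ?thesis
    proof (cases "r - Pi \<sigma>1 \<le> Pi \<sigma>2 - r")
      case True
      have a: "\<bar>Pi \<sigma>1 - r\<bar> = r - Pi \<sigma>1" using s1b by auto
      have "dist (\<gamma> r) (P \<sigma>1) \<le> R + \<delta> + D/2" using near[of \<sigma>1] a s1b(3) True unfolding D_def by argo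
      thus ?thesis using Dbound s1b by (intro bexI[of _ \<sigma>1]) auto
    next
      case False
      have a: "\<bar>Pi \<sigma>2 - r\<bar> = Pi \<sigma>2 - r" using s2b by auto
      have "dist (\<gamma> r) (P \<sigma>2) \<le> R + \<delta> + D/2" using near[of \<sigma>2] a s2b(3) False unfolding D_def by argo
      thus ?thesis using Dbound s1b s2b by (intro bexI[of _ \<sigma>2]) auto
    qed
  qed
  thus ?thesis unfolding B_def .
qed



lemma qg_from_hyp:
  fixes f :: "'a::metric_space \<Rightarrow> 'b::metric_space"
  assumes H: "\<forall>y y' g. geodesic_from g y y' \<longrightarrow>
           rectifiable_on (f \<circ> g) 0 (dist y y') \<and>
           path_length (f \<circ> g) 0 (dist y y') \<le> lam * dist (f y) (f y') + C"
    and h: "geodesic_from h x y"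
  shows "qgp (f \<circ> h) lam C 0 (dist x y)"
  unfolding qgp_def
proof (intro allI impI)
  fix a b n T assume a0: "0 \<le> a" and ab: "a \<le> b" and bL: "b \<le> dist x y" and p: "is_part a b n T"
  define g' where "g' = (\<lambda>\<tau>. h (a + \<tau>))"
  have g': "geodesic_from g' (h a) (h b)" unfolding g'_def by (rule geod_sub[OF h a0 ab bL])
  have dab: "dist (h a) (h b) = b - a" using geod_dist[OF h, of a b] a0 ab bL by auto
  from H g' have rect: "rectifiable_on (f \<circ> g') 0 (dist (h a) (h b))"
    and pl: "path_length (f \<circ> g') 0 (dist (h a) (h b)) \<le> lam * dist (f (h a)) (f (h b)) + C" by blast+
  define T' where "T' i = T i - a" for i
  have eq: "psum (f \<circ> h) n T = (\<Sum>i<n. dist ((f \<circ> g') (T' i)) ((f \<circ> g') (T' (Suc i))))"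
    unfolding psum_def g'_def T'_def by simp
  have mem: "psum (f \<circ> h) n T \<in> partition_sums (f \<circ> g') 0 (dist (h a) (h b))"
  proof -
    have "T' 0 = 0 \<and> T' n = dist (h a) (h b) \<and> (\<forall>i<n. T' i \<le> T' (Suc i))"
      using p dab unfolding is_part_def T'_def by auto
    thus ?thesis unfolding partition_sums_def eq by blast
  qed
  have "psum (f \<circ> h) n T \<le> path_length (f \<circ> g') 0 (dist (h a) (h b))"
    unfolding path_length_def using rect mem unfolding rectifiable_on_def by (intro cSup_upper) auto
  thus "psum (f \<circ> h) n T \<le> lam * dist ((f \<circ> h) a) ((f \<circ> h) b) + C" using pl by simp
qed

lemma cont_comp:
  fixes f :: "'a::metric_space \<Rightarrow> 'b::metric_space"
  assumes "continuous_on UNIV f" "geodesic_from h x y"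
  shows "continuous_on {0..dist x y} (f \<circ> h)"
  using continuous_on_compose[OF geod_cont[OF assms(2)] continuous_on_subset[OF assms(1)]] by simp

lemma slim0:
  assumes hyp: "hyperbolic TYPE('a::metric_space) \<delta>" "geodesic_from g0 (x::'a) y" "geodesic_from g1 x z"
    "geodesic_from g2 y z" "0 \<le> \<rho>" "\<rho> \<le> dist x y"
  shows "(\<exists>\<rho>'\<in>{0..dist x z}. dist (g0 \<rho>) (g1 \<rho>') \<le> \<delta>) \<or> (\<exists>\<rho>'\<in>{0..dist y z}. dist (g0 \<rho>) (g2 \<rho>') \<le> \<delta>)"
proof (cases "\<rho> \<le> gp x y z")
  case True
  have "\<rho> \<le> dist x z" using True gp_le2[of x y z] by linarith
  thus ?thesis using thin01[OF assms(1-5) True] assms(5) by auto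
next
  case False
  have t1: "dist x y - \<rho> \<le> dist y z" using False unfolding gp_def
    using dist_triangle[of x y z] by (simp add: dist_commute)
  thus ?thesis using thin02[OF assms(1-4) _ assms(6)] False assms(6) by auto
qed



definition slim :: "'a::metric_space itself \<Rightarrow> real \<Rightarrow> bool" where
  "slim T d \<longleftrightarrow> (\<forall>(x::'a) y z h0 h1 h2 s. geodesic_from h0 x y \<and> geodesic_from h1 x z \<and> geodesic_from h2 y z
     \<and> s \<in> {0..dist x y} \<longrightarrow>
     (\<exists>s'\<in>{0..dist x z}. dist (h0 s) (h1 s') \<le> d) \<or> (\<exists>s'\<in>{0..dist y z}. dist (h0 s) (h2 s') \<le> d))"

lemma Y_slim:
  fixes f :: "'a::metric_space \<Rightarrow> 'b::metric_space"
    and a b lam C \<delta> :: real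
  assumes "a > 0" and "b \<ge> 0" and lam: "lam \<ge> 1" and C: "C \<ge> 0"
    and cf: "continuous_on UNIV f"
    and low: "\<forall>y y'. dist (f y) (f y') \<ge> a * dist y y' - b"
    and H: "\<forall>y y' g. geodesic_from g y y' \<longrightarrow>
           rectifiable_on (f \<circ> g) 0 (dist y y') \<and>
           path_length (f \<circ> g) 0 (dist y y') \<le> lam * dist (f y) (f y') + C"
    and hyp: "hyperbolic TYPE('b) \<delta>" and dpos: "\<delta> > 0"
  shows "slim TYPE('a) ((C/2 + (lam * lam * \<delta> + 6 * (lam * \<delta>) + \<delta>) / 2 + 2 * \<delta>
             + (C/6 + (lam * lam * \<delta> + 10 * (lam * \<delta>) + 21 * \<delta>) / 6) + b) / a)"
  unfolding slim_def
proof (intro allI impI, elim conjE)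
  fix x y z :: 'a and h0 h1 h2 and s :: real
  assume h0: "geodesic_from h0 x y" and h1: "geodesic_from h1 x z" and h2: "geodesic_from h2 y z"
    and s: "s \<in> {0..dist x y}"
  define A0 where "A0 = C/2 + (lam * lam * \<delta> + 6 * (lam * \<delta>) + \<delta>) / 2"
  define B0 where "B0 = C/6 + (lam * lam * \<delta> + 10 * (lam * \<delta>) + 21 * \<delta>) / 6"
  define M where "M = A0 + 2 * \<delta> + B0"
  have gs: "geodesic_space TYPE('b)" using hyp_geod[OF hyp] .
  obtain \<gamma>0 where g0: "geodesic_from \<gamma>0 (f x) (f y)" using geod_exists[OF gs] by blast
  obtain \<gamma>1 where g1: "geodesic_from \<gamma>1 (f x) (f z)" using geod_exists[OF gs] by blast
  obtain \<gamma>2 where g2: "geodesic_from \<gamma>2 (f y) (f z)" using geod_exists[OF gs] by blast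
  define P0 where "P0 = f \<circ> h0"
  define P1 where "P1 = f \<circ> h1"
  define P2 where "P2 = f \<circ> h2"
  have P00: "P0 0 = f x" "P0 (dist x y) = f y" unfolding P0_def using geod_0[OF h0] geod_L[OF h0] by auto
  have P10: "P1 0 = f x" "P1 (dist x z) = f z" unfolding P1_def using geod_0[OF h1] geod_L[OF h1] by auto
  have P20: "P2 0 = f y" "P2 (dist y z) = f z" unfolding P2_def using geod_0[OF h2] geod_L[OF h2] by auto
  have d0: "0 \<le> dist x y" "0 \<le> dist x z" "0 \<le> dist y z" by auto
  have A: "gp (P0 s) (f x) (f y) \<le> A0"
    using ht_bound[OF hyp dpos lam C d0(1) cont_comp[OF cf h0] qg_from_hyp[OF H h0], of s] s
    unfolding A0_def P0_def[symmetric] P00 by auto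
  define e where "e = P0 s"
  define \<rho> where "\<rho> = gp (f x) e (f y)"
  have \<rho>: "0 \<le> \<rho>" "\<rho> \<le> dist (f x) (f y)" unfolding \<rho>_def using gp_nonneg gp_le2 by auto
  have ne: "dist (\<gamma>0 \<rho>) e \<le> A0 + \<delta>" using near_geod[OF hyp g0, of e] A unfolding \<rho>_def e_def by linarith
  have fin: "dist (f (h0 s)) (f q) \<le> M \<Longrightarrow> a * dist (h0 s) q \<le> M + b" for q
    using low by (smt (verit))
  have key: "dist (f (h0 s)) (f q) \<le> M \<Longrightarrow> dist (h0 s) q \<le> (M + b) / a" for q
    using fin[of q] \<open>a > 0\<close> by (simp add: field_simps mult.commute)
  from slim0[OF hyp g0 g1 g2 \<rho>]
  have R: "(\<exists>s'\<in>{0..dist x z}. dist (h0 s) (h1 s') \<le> (M + b) / a) \<or>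
        (\<exists>s'\<in>{0..dist y z}. dist (h0 s) (h2 s') \<le> (M + b) / a)"
  proof (elim disjE bexE)
    fix \<rho>' assume r: "\<rho>' \<in> {0..dist (f x) (f z)}" and d1: "dist (\<gamma>0 \<rho>) (\<gamma>1 \<rho>') \<le> \<delta>"
    obtain \<tau> where \<tau>: "\<tau> \<in> {0..dist x z}" "dist (\<gamma>1 \<rho>') (P1 \<tau>) \<le> B0"
      using near_path[OF hyp dpos lam C d0(2) cont_comp[OF cf h1] qg_from_hyp[OF H h1], of \<gamma>1 \<rho>']
        g1 r unfolding B0_def P1_def[symmetric] P10 by auto
    have "dist e (P1 \<tau>) \<le> dist e (\<gamma>0 \<rho>) + dist (\<gamma>0 \<rho>) (\<gamma>1 \<rho>') + dist (\<gamma>1 \<rho>') (P1 \<tau>)"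
      using dist_triangle[of e "P1 \<tau>" "\<gamma>0 \<rho>"] dist_triangle[of "\<gamma>0 \<rho>" "P1 \<tau>" "\<gamma>1 \<rho>'"] by linarith
    hence "dist (f (h0 s)) (f (h1 \<tau>)) \<le> M" using ne d1 \<tau>(2) unfolding M_def e_def P0_def P1_def
      by (simp add: dist_commute)
    thus ?thesis using key[of "h1 \<tau>"] \<tau>(1) by blast
  next
    fix \<rho>' assume r: "\<rho>' \<in> {0..dist (f y) (f z)}" and d1: "dist (\<gamma>0 \<rho>) (\<gamma>2 \<rho>') \<le> \<delta>"
    obtain \<tau> where \<tau>: "\<tau> \<in> {0..dist y z}" "dist (\<gamma>2 \<rho>') (P2 \<tau>) \<le> B0"
      using near_path[OF hyp dpos lam C d0(3) cont_comp[OF cf h2] qg_from_hyp[OF H h2], of \<gamma>2 \<rho>']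
        g2 r unfolding B0_def P2_def[symmetric] P20 by auto
    have "dist e (P2 \<tau>) \<le> dist e (\<gamma>0 \<rho>) + dist (\<gamma>0 \<rho>) (\<gamma>2 \<rho>') + dist (\<gamma>2 \<rho>') (P2 \<tau>)"
      using dist_triangle[of e "P2 \<tau>" "\<gamma>0 \<rho>"] dist_triangle[of "\<gamma>0 \<rho>" "P2 \<tau>" "\<gamma>2 \<rho>'"] by linarith
    hence "dist (f (h0 s)) (f (h2 \<tau>)) \<le> M" using ne d1 \<tau>(2) unfolding M_def e_def P0_def P2_def
      by (simp add: dist_commute)
    thus ?thesis using key[of "h2 \<tau>"] \<tau>(1) by blast
  qed
  thus "(\<exists>s'\<in>{0..dist x z}. dist (h0 s) (h1 s') \<le> ((C/2 + (lam * lam * \<delta> + 6 * (lam * \<delta>) + \<delta>) / 2 + 2 * \<delta>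
             + (C/6 + (lam * lam * \<delta> + 10 * (lam * \<delta>) + 21 * \<delta>) / 6) + b) / a)) \<or>
     (\<exists>s'\<in>{0..dist y z}. dist (h0 s) (h2 s') \<le> ((C/2 + (lam * lam * \<delta> + 6 * (lam * \<delta>) + \<delta>) / 2 + 2 * \<delta>
             + (C/6 + (lam * lam * \<delta> + 10 * (lam * \<delta>) + 21 * \<delta>) / 6) + b) / a))"
    unfolding M_def A0_def B0_def .
qed



lemma closed_near_set:
  fixes h h' :: "real \<Rightarrow> 'a::metric_space"
  assumes ch: "continuous_on {0..L} h" and ch': "continuous_on {0..L'} h'"
  shows "closed {\<mu>\<in>{0..L}. \<exists>\<nu>\<in>{0..L'}. dist (h \<mu>) (h' \<nu>) \<le> d}"
proof -
  define box where "box = {0..L} \<times> {0..L'}"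
  define F where "F p = dist (h (fst p)) (h' (snd p))" for p
  have cF: "continuous_on box F" unfolding F_def box_def
    by (intro continuous_on_dist continuous_on_compose2[OF ch continuous_on_fst]
        continuous_on_compose2[OF ch' continuous_on_snd] continuous_on_id) auto
  have cb: "compact box" unfolding box_def by (intro compact_Times compact_Icc)
  define K where "K = box \<inter> F -` {..d}"
  have clK: "closed K" unfolding K_def
    by (rule continuous_closed_preimage[OF cF]) (auto simp: compact_imp_closed[OF cb])
  have "compact (box \<inter> K)" using cb clK by auto
  moreover have "box \<inter> K = K" unfolding K_def by auto
  ultimately have cK: "compact K" by simp
  have "compact (fst ` K)" by (rule compact_continuous_image[OF continuous_on_fst[OF continuous_on_id] cK])
  hence clf: "closed (fst ` K)" by (rule compact_imp_closed)
  have eqK: "fst ` K = {\<mu>\<in>{0..L}. \<exists>\<nu>\<in>{0..L'}. dist (h \<mu>) (h' \<nu>) \<le> d}"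
  proof (rule set_eqI, rule iffI)
    fix \<mu> assume "\<mu> \<in> fst ` K"
    then obtain p where "p \<in> K" "\<mu> = fst p" by blast
    thus "\<mu> \<in> {\<mu>\<in>{0..L}. \<exists>\<nu>\<in>{0..L'}. dist (h \<mu>) (h' \<nu>) \<le> d}"
      unfolding K_def box_def F_def by (cases p) auto
  next
    fix \<mu> assume "\<mu> \<in> {\<mu>\<in>{0..L}. \<exists>\<nu>\<in>{0..L'}. dist (h \<mu>) (h' \<nu>) \<le> d}"
    then obtain \<nu> where "\<mu> \<in> {0..L}" "\<nu> \<in> {0..L'}" "dist (h \<mu>) (h' \<nu>) \<le> d" by blast
    hence "(\<mu>, \<nu>) \<in> K" unfolding K_def box_def F_def by auto
    thus "\<mu> \<in> fst ` K" by (metis fst_conv image_eqI)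
  qed
  show ?thesis using clf unfolding eqK .
qed

lemma geod_prefix:
  assumes "geodesic_from g x y" "0 \<le> \<mu>" "\<mu> \<le> dist x y"
  shows "geodesic_from g x (g \<mu>)"
proof -
  have d: "dist x (g \<mu>) = \<mu>" using geod_from_start[OF assms] .
  show ?thesis unfolding geodesic_from_def d using geod_0[OF assms(1)] geod_dist[OF assms(1)] assms by auto
qed

lemma slimD:
  assumes "slim TYPE('a::metric_space) d" "geodesic_from h0 (x::'a) y" "geodesic_from h1 x z"
    "geodesic_from h2 y z" "0 \<le> s" "s \<le> dist x y"
  shows "(\<exists>s'\<in>{0..dist x z}. dist (h0 s) (h1 s') \<le> d) \<or> (\<exists>s'\<in>{0..dist y z}. dist (h0 s) (h2 s') \<le> d)"
  using assms unfolding slim_def by auto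

lemma core:
  fixes h h' :: "real \<Rightarrow> 'a::metric_space"
  assumes sl: "slim TYPE('a) d" and d0: "d \<ge> 0" and gs: "geodesic_space TYPE('a)"
    and h: "geodesic_from h x y" and h': "geodesic_from h' x z" and s: "0 \<le> s" "s \<le> gp x y z"
  shows "dist (h s) (h' s) \<le> 4 * d"
proof -
  obtain k where k: "geodesic_from k y z" using geod_exists[OF gs] by blast
  define Lxy where "Lxy = dist x y"
  define Lxz where "Lxz = dist x z"
  define Lyz where "Lyz = dist y z"
  have sLxy: "s \<le> Lxy" unfolding Lxy_def using s gp_le1[of x y z] by linarith
  have sLxz: "s \<le> Lxz" unfolding Lxz_def using s gp_le2[of x y z] by linarith
  define S1 where "S1 = {\<mu>\<in>{0..Lxy}. \<exists>\<nu>\<in>{0..Lxz}. dist (h \<mu>) (h' \<nu>) \<le> d}"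
  define S2 where "S2 = {\<mu>\<in>{0..Lxy}. \<exists>\<kappa>\<in>{0..Lyz}. dist (h \<mu>) (k \<kappa>) \<le> d}"
  have c1: "closed S1" unfolding S1_def Lxy_def Lxz_def by (rule closed_near_set[OF geod_cont[OF h] geod_cont[OF h']])
  have c2: "closed S2" unfolding S2_def Lxy_def Lyz_def by (rule closed_near_set[OF geod_cont[OF h] geod_cont[OF k]])
  have cov: "{0..Lxy} \<subseteq> S1 \<union> S2"
  proof
    fix \<mu> assume "\<mu> \<in> {0..Lxy}"
    hence m: "0 \<le> \<mu>" "\<mu> \<le> dist x y" unfolding Lxy_def by auto
    from slimD[OF sl h h' k m] show "\<mu> \<in> S1 \<union> S2" unfolding S1_def S2_def Lxy_def Lxz_def Lyz_def
      using m by auto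
  qed
  have in1: "0 \<in> S1 \<inter> {0..Lxy}" unfolding S1_def Lxy_def Lxz_def using geod_0[OF h] geod_0[OF h'] d0
    by (auto intro!: bexI[of _ 0])
  have in2: "Lxy \<in> S2 \<inter> {0..Lxy}" unfolding S2_def Lxy_def Lyz_def using geod_L[OF h] geod_0[OF k] d0
    by (auto intro!: bexI[of _ 0])
  have nc: "\<not> (\<exists>A B. closed A \<and> closed B \<and> {0..Lxy} \<subseteq> A \<union> B \<and> A \<inter> B \<inter> {0..Lxy} = {}
      \<and> A \<inter> {0..Lxy} \<noteq> {} \<and> B \<inter> {0..Lxy} \<noteq> {})"
    using connected_Icc[of 0 Lxy] unfolding connected_closed .
  have "S1 \<inter> S2 \<inter> {0..Lxy} \<noteq> {}"
  proof
    assume "S1 \<inter> S2 \<inter> {0..Lxy} = {}"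
    hence "closed S1 \<and> closed S2 \<and> {0..Lxy} \<subseteq> S1 \<union> S2 \<and> S1 \<inter> S2 \<inter> {0..Lxy} = {}
      \<and> S1 \<inter> {0..Lxy} \<noteq> {} \<and> S2 \<inter> {0..Lxy} \<noteq> {}" using c1 c2 cov in1 in2 by blast
    thus False using nc by blast
  qed
  then obtain \<mu> \<nu> \<kappa> where \<mu>: "0 \<le> \<mu>" "\<mu> \<le> Lxy" and \<nu>: "0 \<le> \<nu>" "\<nu> \<le> Lxz" and \<kappa>: "0 \<le> \<kappa>" "\<kappa> \<le> Lyz"
    and dA: "dist (h \<mu>) (h' \<nu>) \<le> d" and dB: "dist (h \<mu>) (k \<kappa>) \<le> d"
    unfolding S1_def S2_def by auto
  define m where "m = h \<mu>"
  define a' where "a' = h' \<nu>"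
  define b' where "b' = k \<kappa>"
  define Am where "Am = dist m a'"
  define Bm where "Bm = dist m b'"
  have Am: "Am \<le> d" unfolding Am_def m_def a'_def using dA .
  have Bm: "Bm \<le> d" unfolding Bm_def m_def b'_def using dB .
  have xm: "dist x m = \<mu>" unfolding m_def using geod_from_start[OF h] \<mu> unfolding Lxy_def by auto
  have xa: "dist x a' = \<nu>" unfolding a'_def using geod_from_start[OF h'] \<nu> unfolding Lxz_def by auto
  have my: "dist m y = Lxy - \<mu>" unfolding m_def Lxy_def using geod_to_end[OF h] \<mu> unfolding Lxy_def by auto
  have yb: "dist y b' = \<kappa>" unfolding b'_def using geod_from_start[OF k] \<kappa> unfolding Lyz_def by auto
  have az: "dist a' z = Lxz - \<nu>" unfolding a'_def Lxz_def using geod_to_end[OF h'] \<nu> unfolding Lxz_def by auto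
  have bz: "dist b' z = Lyz - \<kappa>" unfolding b'_def Lyz_def using geod_to_end[OF k] \<kappa> unfolding Lyz_def by auto
  have e1: "\<bar>\<nu> - \<mu>\<bar> \<le> Am" unfolding Am_def using dist_triangle[of x a' m] dist_triangle[of x m a'] xm xa
    by (auto simp: dist_commute abs_le_iff)
  have e2: "\<bar>\<kappa> - (Lxy - \<mu>)\<bar> \<le> Bm" unfolding Bm_def using dist_triangle[of y b' m] dist_triangle[of y m b'] my yb
    by (auto simp: dist_commute abs_le_iff)
  have ab: "dist a' b' \<le> Am + Bm" unfolding Am_def Bm_def using dist_triangle[of a' b' m] by (simp add: dist_commute)
  have e3: "\<bar>(Lxz - \<nu>) - (Lyz - \<kappa>)\<bar> \<le> Am + Bm"
    using dist_triangle[of a' z b'] dist_triangle[of b' z a'] az bz ab by (auto simp: dist_commute abs_le_iff)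
  have gpe: "gp x y z = (Lxy + Lxz - Lyz) / 2" unfolding gp_def Lxy_def Lxz_def Lyz_def by simp
  define p where "p = h s"
  define q where "q = h' s"
  have aq: "dist a' q = \<bar>\<nu> - s\<bar>" unfolding a'_def q_def using geod_dist[OF h'] \<nu> s sLxz unfolding Lxz_def by auto
  have "dist p q \<le> 4 * d"
  proof (cases "s \<le> \<mu>")
    case True
    have hxm: "geodesic_from h x m" unfolding m_def using geod_prefix[OF h \<mu>(1)] \<mu>(2) unfolding Lxy_def by auto
    have hxa: "geodesic_from h' x a'" unfolding a'_def using geod_prefix[OF h' \<nu>(1)] \<nu>(2) unfolding Lxz_def by auto
    obtain j where j: "geodesic_from j m a'" using geod_exists[OF gs] by blast
    have pm: "dist p m = \<mu> - s" unfolding p_def m_def using geod_dist[OF h, of s \<mu>] s True \<mu> unfolding Lxy_def by auto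
    from slimD[OF sl hxm hxa j s(1)] True xm
    consider (A) s' where "s' \<in> {0..\<nu>}" "dist p (h' s') \<le> d"
      | (B) \<iota> where "\<iota> \<in> {0..Am}" "dist p (j \<iota>) \<le> d"
      unfolding xa Am_def[symmetric] p_def by auto
    thus ?thesis
    proof cases
      case (A s')
      have xs: "dist x (h' s') = s'" using geod_from_start[OF h'] A(1) \<nu> unfolding Lxz_def by auto
      have xp: "dist x p = s" unfolding p_def using geod_from_start[OF h] s sLxy unfolding Lxy_def by auto
      have "\<bar>s - s'\<bar> \<le> d" using dist_triangle[of x p "h' s'"] dist_triangle[of x "h' s'" p] A(2) xs xp
        by (auto simp: dist_commute abs_le_iff)
      moreover have "dist (h' s') q = \<bar>s' - s\<bar>" unfolding q_def using geod_dist[OF h'] A(1) \<nu> s sLxz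
        unfolding Lxz_def by auto
      moreover have "dist p q \<le> dist p (h' s') + dist (h' s') q" by (rule dist_triangle)
      ultimately show ?thesis using A(2) d0 by (simp add: abs_minus_commute)
    next
      case (B \<iota>)
      have jm: "dist (j \<iota>) m = \<iota>" using geod_from_start[OF j] B(1) unfolding Am_def by (auto simp: dist_commute)
      have ja: "dist (j \<iota>) a' = Am - \<iota>" using geod_to_end[OF j] B(1) unfolding Am_def by auto
      have "dist p m \<le> d + \<iota>" using dist_triangle[of p m "j \<iota>"] B(2) jm by linarith
      moreover have "dist p a' \<le> d + (Am - \<iota>)" using dist_triangle[of p a' "j \<iota>"] B(2) ja by linarith
      moreover have "dist p q \<le> dist p a' + dist a' q" by (rule dist_triangle)
      moreover have "\<bar>\<nu> - s\<bar> \<le> (\<mu> - s) + Am" using e1 True unfolding abs_le_iff by linarith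
      ultimately show ?thesis using pm aq Am by linarith
    qed
  next
    case False
    have pm: "dist p m = s - \<mu>" unfolding p_def m_def using geod_dist[OF h, of s \<mu>] s False \<mu> sLxy
      unfolding Lxy_def by auto
    have "dist p q \<le> dist p m + dist m a' + dist a' q"
      using dist_triangle[of p q m] dist_triangle[of m q a'] by linarith
    hence tri: "dist p q \<le> (s - \<mu>) + Am + \<bar>\<nu> - s\<bar>" using pm aq unfolding Am_def by linarith
    have "2 * (s - \<mu>) \<le> (\<nu> - \<mu>) - (\<kappa> - (Lxy - \<mu>)) + ((Lxz - \<nu>) - (Lyz - \<kappa>))"
      using s(2) gpe by (simp add: field_simps)
    hence sm: "2 * (s - \<mu>) \<le> (\<nu> - \<mu>) + Bm + (Am + Bm)" using e2 e3 unfolding abs_le_iff by linarith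
    have "dist p q \<le> 2 * Am + 2 * Bm"
    proof (cases "s - \<mu> \<ge> \<nu> - \<mu>")
      case True
      hence "\<bar>\<nu> - s\<bar> = (s - \<mu>) - (\<nu> - \<mu>)" by simp
      thus ?thesis using tri sm e1 unfolding abs_le_iff by argo
    next
      case False
      hence "\<bar>\<nu> - s\<bar> = (\<nu> - \<mu>) - (s - \<mu>)" by simp
      moreover have "Bm \<ge> 0" unfolding Bm_def by simp
      ultimately show ?thesis using tri sm e1 unfolding abs_le_iff by argo
    qed
    thus ?thesis using Am Bm by linarith
  qed
  thus ?thesis unfolding p_def q_def .
qed



lemma tm0: "tripod_map x y z 0 s = (if s \<le> gp x y z then (0, gp x y z - s) else (1, s - gp x y z))"
  unfolding tripod_map_def Let_def tripod_pt_def gp_def by auto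

lemma tm1: "tripod_map x y z 1 s = (if s \<le> gp x y z then (0, gp x y z - s) else (2, s - gp x y z))"
  unfolding tripod_map_def Let_def tripod_pt_def gp_def by auto

lemma tm2: "tripod_map x y z 2 t = (if t < gp y x z then (1, gp y x z - t) else if t = gp y x z then (0, 0)
    else (2, t - gp y x z))"
  unfolding tripod_map_def Let_def tripod_pt_def gp_def by (auto simp: dist_commute)

lemma slim_thin:
  fixes x y z :: "'a::metric_space"
  assumes sl: "slim TYPE('a) d" and d0: "d \<ge> 0" and gs: "geodesic_space TYPE('a)"
    and h0: "geodesic_from h0 x y" and h1: "geodesic_from h1 x z" and h2: "geodesic_from h2 y z"
  shows "delta_thin (4 * d) x y z h0 h1 h2"
proof -
  define \<alpha> where "\<alpha> = gp x y z"
  define \<beta> where "\<beta> = gp y x z"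
  define \<gamma> where "\<gamma> = gp z x y"
  have ab: "\<alpha> + \<beta> = dist x y" unfolding \<alpha>_def \<beta>_def gp_def by (simp add: dist_commute field_simps)
  have ag: "\<alpha> + \<gamma> = dist x z" unfolding \<alpha>_def \<gamma>_def gp_def by (simp add: dist_commute field_simps)
  have bg: "\<beta> + \<gamma> = dist y z" unfolding \<beta>_def \<gamma>_def gp_def by (simp add: dist_commute field_simps)
  have a0: "\<alpha> \<ge> 0" "\<beta> \<ge> 0" "\<gamma> \<ge> 0" unfolding \<alpha>_def \<beta>_def \<gamma>_def by (auto intro: gp_nonneg)
  have r0: "geodesic_from (\<lambda>\<tau>. h0 (dist x y - \<tau>)) y x" by (rule geod_rev[OF h0])
  have r1: "geodesic_from (\<lambda>\<tau>. h1 (dist x z - \<tau>)) z x" by (rule geod_rev[OF h1])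
  have r2: "geodesic_from (\<lambda>\<tau>. h2 (dist y z - \<tau>)) z y" by (rule geod_rev[OF h2])
  have I: "dist (h0 s) (h1 s) \<le> 4 * d" if "0 \<le> s" "s \<le> \<alpha>" for s
    using core[OF sl d0 gs h0 h1] that unfolding \<alpha>_def by auto
  have II: "dist (h0 (dist x y - s)) (h2 s) \<le> 4 * d" if "0 \<le> s" "s \<le> \<beta>" for s
    using core[OF sl d0 gs r0 h2] that unfolding \<beta>_def by auto
  have III: "dist (h1 (dist x z - s)) (h2 (dist y z - s)) \<le> 4 * d" if "0 \<le> s" "s \<le> \<gamma>" for s
    using core[OF sl d0 gs r1 r2] that unfolding \<gamma>_def by auto
  note tms = tm0[of x y z, folded \<alpha>_def] tm1[of x y z, folded \<alpha>_def] tm2[of x y z, folded \<beta>_def]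
  have c00: "s = t" if "tripod_map x y z 0 s = tripod_map x y z 0 t" for s t
    using that unfolding tms by (auto split: if_splits)
  have c11: "s = t" if "tripod_map x y z 1 s = tripod_map x y z 1 t" for s t
    using that unfolding tms by (auto split: if_splits)
  have c22: "s = t" if "tripod_map x y z 2 s = tripod_map x y z 2 t" for s t
    using that unfolding tms by (auto split: if_splits)
  have c01: "dist (h0 s) (h1 t) \<le> 4 * d" if "tripod_map x y z 0 s = tripod_map x y z 1 t" "0 \<le> s" for s t
  proof -
    have "s = t \<and> s \<le> \<alpha>" using that unfolding tms by (auto split: if_splits)
    thus ?thesis using I that by auto
  qed
  have c02: "dist (h0 s) (h2 t) \<le> 4 * d" if "tripod_map x y z 0 s = tripod_map x y z 2 t" "0 \<le> s" "0 \<le> t"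
      for s t
  proof -
    have "(s = \<alpha> \<and> t = \<beta>) \<or> (\<alpha> < s \<and> t < \<beta> \<and> s - \<alpha> = \<beta> - t)"
      using that(1) unfolding tms by (auto split: if_splits)
    thus ?thesis
    proof
      assume "s = \<alpha> \<and> t = \<beta>"
      moreover have "dist x y - \<beta> = \<alpha>" using ab by linarith
      ultimately show ?thesis using II[of \<beta>] a0 by simp
    next
      assume A: "\<alpha> < s \<and> t < \<beta> \<and> s - \<alpha> = \<beta> - t"
      hence "dist x y - t = s" using ab by linarith
      thus ?thesis using II[of t] A that by simp
    qed
  qed
  have c12: "dist (h1 s) (h2 t) \<le> 4 * d" if "tripod_map x y z 1 s = tripod_map x y z 2 t" "0 \<le> s"
      "s \<le> dist x z" for s t
  proof -
    have "(s = \<alpha> \<and> t = \<beta>) \<or> (\<alpha> < s \<and> \<beta> < t \<and> s - \<alpha> = t - \<beta>)"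
      using that(1) unfolding tms by (auto split: if_splits)
    thus ?thesis
    proof
      assume "s = \<alpha> \<and> t = \<beta>"
      moreover have "dist x z - \<gamma> = \<alpha>" "dist y z - \<gamma> = \<beta>" using ag bg by linarith+
      ultimately show ?thesis using III[of \<gamma>] a0 by simp
    next
      assume A: "\<alpha> < s \<and> \<beta> < t \<and> s - \<alpha> = t - \<beta>"
      have e1: "dist x z - (dist x z - s) = s" by simp
      have e2: "dist y z - (dist x z - s) = t" using A ag bg by linarith
      have "dist x z - s \<le> \<gamma>" using A ag by linarith
      thus ?thesis using III[of "dist x z - s"] that e1 e2 by simp
    qed
  qed
  show ?thesis unfolding delta_thin_def Let_def
  proof (intro ballI impI)
    fix k l :: nat and s t
    assume k: "k \<in> {0,1,2}" and l: "l \<in> {0,1,2}"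
      and s: "s \<in> {0..(if k = 0 then dist x y else if k = 1 then dist x z else dist y z)}"
      and t: "t \<in> {0..(if l = 0 then dist x y else if l = 1 then dist x z else dist y z)}"
      and eq: "tripod_map x y z k s = tripod_map x y z l t"
    have d4: "0 \<le> 4 * d" using d0 by simp
    show "dist ((if k = 0 then h0 else if k = 1 then h1 else h2) s) ((if l = 0 then h0 else if l = 1 then h1 else h2) t) \<le> 4 * d"
      using k l
    proof (elim insertE emptyE)
      assume kl: "k = 0" "l = 0"
      hence "s = t" using c00 eq by simp
      thus ?thesis using kl d4 by simp
    next
      assume "k = 0" "l = 1" thus ?thesis using c01 eq s by auto
    next
      assume "k = 0" "l = 2" thus ?thesis using c02 eq s t by auto
    next
      assume "k = 1" "l = 0" thus ?thesis using c01 eq t by (auto simp: dist_commute)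
    next
      assume kl: "k = 1" "l = 1"
      hence "s = t" using c11 eq by simp
      thus ?thesis using kl d4 by simp
    next
      assume "k = 1" "l = 2" thus ?thesis using c12 eq s by auto
    next
      assume "k = 2" "l = 0" thus ?thesis using c02 eq s t by (auto simp: dist_commute)
    next
      assume "k = 2" "l = 1" thus ?thesis using c12 eq t by (auto simp: dist_commute)
    next
      assume kl: "k = 2" "l = 2"
      hence "s = t" using c22 eq by simp
      thus ?thesis using kl d4 by simp
    qed
  qed
qed



lemma thin_mono:
  assumes "delta_thin \<delta> x y z g0 g1 g2" "\<delta> \<le> \<delta>'"
  shows "delta_thin \<delta>' x y z g0 g1 g2"
  using assms unfolding delta_thin_def Let_def by (meson order_trans)

lemma hyp_mono:
  assumes "hyperbolic TYPE('a::metric_space) \<delta>" "\<delta> \<le> \<delta>'"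
  shows "hyperbolic TYPE('a) \<delta>'"
  using assms thin_mono unfolding hyperbolic_def by blast

lemma hyp_nonneg:
  assumes hyp: "hyperbolic TYPE('a::metric_space) \<delta>"
  shows "\<delta> \<ge> 0"
proof -
  fix x :: 'a
  have g: "geodesic_from (\<lambda>_. x) x x" unfolding geodesic_from_def by simp
  have "dist x x \<le> \<delta>" using thin01[OF hyp g g g order_refl] gp_nonneg[of x x x] unfolding gp_def by simp
  thus ?thesis by simp
qed

lemma le_lim:
  fixes D c k :: real
  assumes "\<And>\<epsilon>. \<epsilon> > 0 \<Longrightarrow> D \<le> c + k * \<epsilon>" "k \<ge> 0"
  shows "D \<le> c"
proof (rule field_le_epsilon)
  fix e :: real assume e: "0 < e"
  have "D \<le> c + k * (e / (k + 1))" using assms(1)[of "e / (k+1)"] e assms(2) by simp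
  moreover have "k * (e / (k + 1)) \<le> e" using e assms(2) by (simp add: field_simps)
  ultimately show "D \<le> c + e" by linarith
qed



theorem mainTheorem19:
  fixes f :: "'a::metric_space \<Rightarrow> 'b::metric_space"
    and a b lam C \<delta> :: real
  assumes "proper_space TYPE('a)" and "geodesic_space TYPE('a)"
    and "proper_space TYPE('b)" and "geodesic_space TYPE('b)"
    and "a > 0" and "b \<ge> 0" and "lam \<ge> 1" and "C \<ge> 0"
    and "continuous_on UNIV f"
    and "\<forall>y y'. dist (f y) (f y') \<ge> a * dist y y' - b"
    and "\<forall>y y' g. geodesic_from g y y' \<longrightarrow>
           rectifiable_on (f \<circ> g) 0 (dist y y') \<and>
           path_length (f \<circ> g) 0 (dist y y') \<le> lam * dist (f y) (f y') + C"
    and "hyperbolic TYPE('b) \<delta>"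
  shows "hyperbolic TYPE('a)
           (4 / a * ((6 * lam^2 + 14 * lam + 5) * \<delta> + (4 * lam + 3) / (6 * lam + 2) * C + b))
       \<and> 4 / a * ((6 * lam^2 + 14 * lam + 5) * \<delta> + (4 * lam + 3) / (6 * lam + 2) * C + b)
           \<le> 4 / a * ((6 * lam^2 + 14 * lam + 5) * \<delta> + C + b)"
proof -
  note A = assms
  have apos: "a > 0" and lam: "lam \<ge> 1" and C: "C \<ge> 0" and b: "b \<ge> 0" using assms by auto
  have hyp: "hyperbolic TYPE('b) \<delta>" using assms by auto
  have d0: "\<delta> \<ge> 0" by (rule hyp_nonneg[OF hyp])
  define M where "M e = C/2 + (lam * lam * e + 6 * (lam * e) + e) / 2 + 2 * e
             + (C/6 + (lam * lam * e + 10 * (lam * e) + 21 * e) / 6)" for e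
  define K where "K = (lam * lam + 6 * lam + 1) / 2 + 2 + (lam * lam + 10 * lam + 21) / 6"
  have K0: "K \<ge> 0" unfolding K_def using lam by (simp add: add_nonneg_nonneg)
  have Meq: "M (\<delta> + e) = M \<delta> + K * e" for e unfolding M_def K_def by (simp add: field_simps)
  define T where "T = 4 / a * ((6 * lam^2 + 14 * lam + 5) * \<delta> + (4 * lam + 3) / (6 * lam + 2) * C + b)"
  have cC: "(4 * lam + 3) / (6 * lam + 2) \<ge> 2/3" using lam by (simp add: field_simps)
  have cC1: "(4 * lam + 3) / (6 * lam + 2) \<le> 1" using lam by (simp add: field_simps)
  have Mle: "M \<delta> \<le> (6 * lam^2 + 14 * lam + 5) * \<delta> + (4 * lam + 3) / (6 * lam + 2) * C"
  proof -
    have c1: "2/3 * C \<le> (4 * lam + 3) / (6 * lam + 2) * C" using mult_right_mono[OF cC C] .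
    have "0 \<le> ((32 * (lam * lam) + 56 * lam - 6) / 6) * \<delta>"
      using lam d0 mult_mono[OF lam lam] by (intro mult_nonneg_nonneg) auto
    moreover have "M \<delta> = 2/3 * C + (6 * lam^2 + 14 * lam + 5) * \<delta> - ((32 * (lam * lam) + 56 * lam - 6) / 6) * \<delta>"
      unfolding M_def by (simp add: field_simps power2_eq_square)
    ultimately show ?thesis using c1 by linarith
  qed
  have main: "dist ((if k = 0 then h0 else if k = 1 then h1 else h2) s)
                   ((if l = 0 then h0 else if l = 1 then h1 else h2) t) \<le> 4 * ((M \<delta> + b) / a)"
    if h0: "geodesic_from h0 (x::'a) y" and h1: "geodesic_from h1 x z" and h2: "geodesic_from h2 y z"
      and k: "k \<in> {0,1,2}" and l: "l \<in> {0,1,2}"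
      and s: "s \<in> {0..(if k = 0 then dist x y else if k = 1 then dist x z else dist y z)}"
      and t: "t \<in> {0..(if l = 0 then dist x y else if l = 1 then dist x z else dist y z)}"
      and eq: "tripod_map x y z k s = tripod_map x y z l t"
    for x y z h0 h1 h2 k l s t
  proof (rule le_lim)
    fix e :: real assume e: "e > 0"
    have hype: "hyperbolic TYPE('b) (\<delta> + e)" using hyp_mono[OF hyp, of "\<delta> + e"] e by simp
    have dpe: "\<delta> + e > 0" using d0 e by simp
    have sl: "slim TYPE('a) ((M (\<delta> + e) + b) / a)"
      using Y_slim[OF apos b lam C A(9) A(10) A(11) hype dpe] unfolding M_def by simp
    have p1: "lam * lam * (\<delta> + e) \<ge> 0" "lam * (\<delta> + e) \<ge> 0" using lam dpe by simp_all
    have Mn: "M (\<delta> + e) \<ge> 0" unfolding M_def using C dpe p1 by argo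
    have sn: "(M (\<delta> + e) + b) / a \<ge> 0" using Mn b apos by simp
    have th: "delta_thin (4 * ((M (\<delta> + e) + b) / a)) x y z h0 h1 h2"
      by (rule slim_thin[OF sl sn A(2) h0 h1 h2])
    have "dist ((if k = 0 then h0 else if k = 1 then h1 else h2) s)
                   ((if l = 0 then h0 else if l = 1 then h1 else h2) t) \<le> 4 * ((M (\<delta> + e) + b) / a)"
      by (rule thin_spec[OF th k l s t eq])
    moreover have "4 * ((M (\<delta> + e) + b) / a) = 4 * ((M \<delta> + b) / a) + (4 * K / a) * e"
      unfolding Meq using apos by (simp add: field_simps)
    ultimately show "dist ((if k = 0 then h0 else if k = 1 then h1 else h2) s)
                   ((if l = 0 then h0 else if l = 1 then h1 else h2) t) \<le> 4 * ((M \<delta> + b) / a) + (4 * K / a) * e"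
      by simp
  next
    show "4 * K / a \<ge> 0" using K0 apos by simp
  qed
  have MT: "4 * ((M \<delta> + b) / a) \<le> T"
  proof -
    have "M \<delta> + b \<le> (6 * lam^2 + 14 * lam + 5) * \<delta> + (4 * lam + 3) / (6 * lam + 2) * C + b" using Mle by simp
    hence "4 / a * (M \<delta> + b) \<le> T" unfolding T_def using apos by (intro mult_left_mono) auto
    thus ?thesis by simp
  qed
  have hypY: "hyperbolic TYPE('a) T"
    unfolding hyperbolic_def
  proof (intro conjI allI impI)
    show "proper_space TYPE('a)" using assms by simp
    show "geodesic_space TYPE('a)" using assms by simp
    fix x y z :: 'a and h0 h1 h2
    assume "geodesic_from h0 x y \<and> geodesic_from h1 x z \<and> geodesic_from h2 y z"
    hence g: "geodesic_from h0 x y" "geodesic_from h1 x z" "geodesic_from h2 y z" by auto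
    show "delta_thin T x y z h0 h1 h2" unfolding delta_thin_def Let_def
      using main[OF g] MT by (meson order_trans)
  qed
  have sec: "T \<le> 4 / a * ((6 * lam^2 + 14 * lam + 5) * \<delta> + C + b)"
  proof -
    have "(4 * lam + 3) / (6 * lam + 2) * C \<le> 1 * C" using mult_right_mono[OF cC1 C] .
    thus ?thesis unfolding T_def using apos by (intro mult_left_mono) auto
  qed
  show ?thesis using hypY sec unfolding T_def by simp
qed


end
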